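(* Let $a,b\in C^0(\mathbb{R})$ be even and positive, and let $G\in C^{1,1}_{\rm loc}(\mathbb{R})$ be even with $G(s)\ge G(M)=0$ for all $s\in\mathbb{R}$ and $G(s)>0$ for $s\in[0,M)$, for some $M>0$. Let $L>0$, $I:=(-L,L)$, and assume that for some $m_0\ge0$ all minimizers of $\mathcal{E}(\cdot,I)$ in $H^1_{m_0}(I)$ are non-odd. Then there exists $\varepsilon>0$ such that, for each $m\in(m_0-\varepsilon,m_0+\varepsilon)\cap[0,\infty)$, the functional $\mathcal{E}(\cdot,I)$ admits non-odd minimizers in $H^1_m(I)$.
   Context: $H^1_m(I):=\{u\in H^1(I):u(-L)=-m,\ u(L)=m\}$ and $\mathcal{E}(u,I):=\int_{-L}^L\{\tfrac12(u')^2a(x)+G(u)b(x)\}\,dx$; minimizer means absolute minimizer. *)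

theory Defs
  imports "HOL-Analysis.Analysis"
begin

definition weak_deriv_on :: "real \<Rightarrow> (real \<Rightarrow> real) \<Rightarrow> (real \<Rightarrow> real) \<Rightarrow> bool" where
  "weak_deriv_on L u g \<longleftrightarrow>
     g absolutely_integrable_on {-L..L} \<and>
     (\<lambda>x. (g x)\<^sup>2) integrable_on {-L..L} \<and>
     (\<forall>x\<in>{-L..L}. u x = u (-L) + integral {-L..x} g)"

text \<open>H^1(I), I = (-L,L), elements identified with their continuous representative.\<close>
definition H1 :: "real \<Rightarrow> (real \<Rightarrow> real) \<Rightarrow> bool" where
  "H1 L u \<longleftrightarrow> (\<exists>g. weak_deriv_on L u g)"

definition H1_m :: "real \<Rightarrow> real \<Rightarrow> (real \<Rightarrow> real) set" where
  "H1_m L m = {u. H1 L u \<and> u (-L) = - m \<and> u L = m}"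

definition wderiv :: "real \<Rightarrow> (real \<Rightarrow> real) \<Rightarrow> real \<Rightarrow> real" where
  "wderiv L u = (SOME g. weak_deriv_on L u g)"

definition energy :: "(real \<Rightarrow> real) \<Rightarrow> (real \<Rightarrow> real) \<Rightarrow> (real \<Rightarrow> real) \<Rightarrow> real
    \<Rightarrow> (real \<Rightarrow> real) \<Rightarrow> real" where
  "energy a b G L u =
     integral {-L..L} (\<lambda>x. (1/2) * (wderiv L u x)\<^sup>2 * a x + G (u x) * b x)"

definition is_minimizer :: "(real \<Rightarrow> real) \<Rightarrow> (real \<Rightarrow> real) \<Rightarrow> (real \<Rightarrow> real) \<Rightarrow> real
    \<Rightarrow> real \<Rightarrow> (real \<Rightarrow> real) \<Rightarrow> bool" where
  "is_minimizer a b G L m u \<longleftrightarrow>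
     u \<in> H1_m L m \<and> (\<forall>v\<in>H1_m L m. energy a b G L u \<le> energy a b G L v)"

definition odd_on :: "real \<Rightarrow> (real \<Rightarrow> real) \<Rightarrow> bool" where
  "odd_on L u \<longleftrightarrow> (\<forall>x\<in>{-L<..<L}. u (-x) = - u x)"

definition even_fun :: "(real \<Rightarrow> real) \<Rightarrow> bool" where
  "even_fun f \<longleftrightarrow> (\<forall>x. f (-x) = f x)"

definition C11_loc :: "(real \<Rightarrow> real) \<Rightarrow> bool" where
  "C11_loc G \<longleftrightarrow> (\<forall>x. G differentiable at x) \<and>
     (\<forall>R>0. \<exists>C. \<forall>x y. \<bar>x\<bar> \<le> R \<longrightarrow> \<bar>y\<bar> \<le> R \<longrightarrow>
        \<bar>deriv G x - deriv G y\<bar> \<le> C * \<bar>x - y\<bar>)"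

end

theory Submission
  imports Defs "HOL-Complex_Analysis.Great_Picard"
begin

lemmas hk_integrable_combine = Henstock_Kurzweil_Integration.integrable_combine
lemmas hk_integral_combine = Henstock_Kurzweil_Integration.integral_combine


lemma discr_le:
  fixes A B W :: real
  assumes "\<And>t. A - 2*t*B + t^2*W \<ge> 0" "W \<ge> 0"
  shows "B^2 \<le> A * W"
proof (cases "W = 0")
  case True
  have "B = 0"
  proof (rule ccontr)
    assume "B \<noteq> 0"
    have "A - 2*((A+1)/(2*B))*B + ((A+1)/(2*B))^2*W \<ge> 0" using assms(1) .
    with True \<open>B\<noteq>0\<close> show False by (simp add: field_simps)
  qed
  then show ?thesis using True by simp
next
  case False
  then have W: "W > 0" using assms(2) by simp
  have "A - 2*(B/W)*B + (B/W)^2*W \<ge> 0" using assms(1) .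
  then have "A - B^2/W \<ge> 0" using W by (simp add: field_simps power2_eq_square)
  then show ?thesis using W by (simp add: field_simps)
qed

lemma CS_weighted:
  fixes a g :: "real \<Rightarrow> real"
  assumes ga: "(\<lambda>x. a x * (g x)^2) integrable_on {p..q}"
    and g: "g integrable_on {p..q}"
    and ia: "(\<lambda>x. 1 / a x) integrable_on {p..q}"
    and apos: "\<And>x. a x > 0"
  shows "(integral {p..q} g)^2 \<le> integral {p..q} (\<lambda>x. 1 / a x) * integral {p..q} (\<lambda>x. a x * (g x)^2)"
proof -
  have "\<And>t. integral {p..q} (\<lambda>x. a x * (g x)^2) - 2*t*integral {p..q} g + t^2 * integral {p..q} (\<lambda>x. 1 / a x) \<ge> 0"
  proof -
    fix t :: real
    have "integral {p..q} (\<lambda>x. a x * (g x)^2 - (2*t) * g x + t^2 * (1 / a x)) \<ge> 0"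
    proof (rule integral_nonneg)
      show "(\<lambda>x. a x * (g x)^2 - (2*t) * g x + t^2 * (1 / a x)) integrable_on {p..q}"
        by (intro integrable_add integrable_diff integrable_on_mult_right ga g ia)
      fix x
      have "a x * (g x)^2 - (2*t) * g x + t^2 * (1 / a x) = a x * (g x - t / a x)^2"
        using apos[of x] by (simp add: field_simps power2_eq_square)
      also have "\<dots> \<ge> 0" using apos[of x] by simp
      finally show "0 \<le> a x * (g x)^2 - (2*t) * g x + t^2 * (1 / a x)" .
    qed
    also have "integral {p..q} (\<lambda>x. a x * (g x)^2 - (2*t) * g x + t^2 * (1 / a x)) =
      integral {p..q} (\<lambda>x. a x * (g x)^2) - 2*t*integral {p..q} g + t^2 * integral {p..q} (\<lambda>x. 1 / a x)"
    proof -
      have i1: "(\<lambda>x. (2*t) * g x) integrable_on {p..q}" "(\<lambda>x. t^2 * (1 / a x)) integrable_on {p..q}"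
        by (rule integrable_on_mult_right[OF g], rule integrable_on_mult_right[OF ia])
      have "integral {p..q} (\<lambda>x. a x * (g x)^2 - (2*t) * g x + t^2 * (1 / a x)) =
        integral {p..q} (\<lambda>x. a x * (g x)^2 - (2*t) * g x) + integral {p..q} (\<lambda>x. t^2 * (1 / a x))"
        by (rule integral_add) (use ga i1 in \<open>auto intro: integrable_diff\<close>)
      also have "integral {p..q} (\<lambda>x. a x * (g x)^2 - (2*t) * g x) = integral {p..q} (\<lambda>x. a x * (g x)^2) - integral {p..q} (\<lambda>x. (2*t) * g x)"
        by (rule integral_diff) (use ga i1 in auto)
      also have "integral {p..q} (\<lambda>x. (2*t) * g x) = 2*t*integral {p..q} g"
        by (rule integral_mult_right)
      also have "integral {p..q} (\<lambda>x. t^2 * (1 / a x)) = t^2 * integral {p..q} (\<lambda>x. 1 / a x)"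
        by (rule integral_mult_right)
      finally show ?thesis .
    qed
    finally show "integral {p..q} (\<lambda>x. a x * (g x)^2) - 2*t*integral {p..q} g + t^2 * integral {p..q} (\<lambda>x. 1 / a x) \<ge> 0" .
  qed
  moreover have "integral {p..q} (\<lambda>x. 1 / a x) \<ge> 0"
    using ia apos by (intro integral_nonneg) (auto simp: less_imp_le)
  ultimately have "(integral {p..q} g)^2 \<le> integral {p..q} (\<lambda>x. a x * (g x)^2) * integral {p..q} (\<lambda>x. 1 / a x)"
    by (intro discr_le) auto
  then show ?thesis by (simp add: mult.commute)
qed

lemma partition_integral:
  fixes f :: "real \<Rightarrow> real" and t :: "nat \<Rightarrow> real"
  assumes mono: "\<And>j. t j \<le> t (Suc j)"
    and int: "\<And>j. j < N \<Longrightarrow> f integrable_on {t j..t (Suc j)}"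
  shows "f integrable_on {t 0..t N} \<and> integral {t 0..t N} f = (\<Sum>j<N. integral {t j..t (Suc j)} f)"
  using int
proof (induction N)
  case 0
  then show ?case using integrable_on_refl[of f "t 0"] by simp
next
  case (Suc N)
  then have IH: "f integrable_on {t 0..t N}" "integral {t 0..t N} f = (\<Sum>j<N. integral {t j..t (Suc j)} f)"
    by auto
  have le: "t 0 \<le> t N" using mono by (induction N) (auto intro: order_trans)
  have iN: "f integrable_on {t N..t (Suc N)}" using Suc.prems by simp
  have "f integrable_on {t 0..t (Suc N)}"
    using hk_integrable_combine[OF le mono IH(1) iN] .
  moreover have "integral {t 0..t (Suc N)} f = integral {t 0..t N} f + integral {t N..t (Suc N)} f"
    using hk_integral_combine[OF le mono \<open>f integrable_on {t 0..t (Suc N)}\<close>] by simp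
  ultimately show ?case using IH by simp
qed

lemma wd_int:
  assumes "weak_deriv_on L u g"
  shows "g integrable_on {-L..L}" "(\<lambda>x. (g x)^2) integrable_on {-L..L}"
    "g absolutely_integrable_on {-L..L}"
  using assms unfolding weak_deriv_on_def absolutely_integrable_on_def by auto

lemma wd_int_sub:
  assumes "weak_deriv_on L u g" "-L \<le> y" "x \<le> L"
  shows "g integrable_on {y..x}" "(\<lambda>x. (g x)^2) integrable_on {y..x}"
proof -
  have s: "{y..x} \<subseteq> {-L..L}" using assms(2,3) by auto
  show "g integrable_on {y..x}" by (rule integrable_subinterval_real[OF wd_int(1)[OF assms(1)] s])
  show "(\<lambda>x. (g x)^2) integrable_on {y..x}" by (rule integrable_subinterval_real[OF wd_int(2)[OF assms(1)] s])
qed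

lemma wd_diff:
  assumes "weak_deriv_on L u g" "-L \<le> y" "y \<le> x" "x \<le> L"
  shows "u x - u y = integral {y..x} g"
proof -
  have all: "\<forall>x\<in>{-L..L}. u x = u (-L) + integral {-L..x} g"
    using assms(1) unfolding weak_deriv_on_def by blast
  have ux: "u x = u (-L) + integral {-L..x} g" using bspec[OF all, of x] assms by simp
  have uy: "u y = u (-L) + integral {-L..y} g" using bspec[OF all, of y] assms by simp
  have "integral {-L..y} g + integral {y..x} g = integral {-L..x} g"
    by (rule hk_integral_combine) (use assms wd_int_sub(1)[OF assms(1), of "-L" x] in auto)
  then show ?thesis using ux uy by simp
qed

lemma wd_cont:
  assumes "weak_deriv_on L u g"
  shows "continuous_on {-L..L} u"
proof -
  have "continuous_on {-L..L} (\<lambda>x. u (-L) + integral {-L..x} g)"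
    by (intro continuous_intros indefinite_integral_continuous_1 wd_int[OF assms])
  then show ?thesis
  proof (rule continuous_on_eq)
    show "\<And>x. x \<in> {-L..L} \<Longrightarrow> u (-L) + integral {-L..x} g = u x"
      using assms unfolding weak_deriv_on_def by (metis (no_types))
  qed
qed

lemma wd_holder:
  assumes "weak_deriv_on L u g" "-L \<le> y" "y \<le> x" "x \<le> L"
  shows "(u x - u y)^2 \<le> (x - y) * integral {-L..L} (\<lambda>x. (g x)^2)"
proof -
  have "(integral {y..x} g)^2 \<le> integral {y..x} (\<lambda>x. 1 / 1) * integral {y..x} (\<lambda>x. 1 * (g x)^2)"
    by (rule CS_weighted) (use wd_int_sub[OF assms(1,2,4)] in \<open>simp_all add: integrable_on_const\<close>)
  also have "\<dots> = (x - y) * integral {y..x} (\<lambda>x. (g x)^2)" using assms by simp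
  also have "\<dots> \<le> (x - y) * integral {-L..L} (\<lambda>x. (g x)^2)"
  proof (rule mult_left_mono)
    show "integral {y..x} (\<lambda>x. (g x)^2) \<le> integral {-L..L} (\<lambda>x. (g x)^2)"
      by (rule integral_subset_le) (use assms wd_int_sub(2)[OF assms(1,2,4)] wd_int(2)[OF assms(1)] in auto)
  qed (use assms in simp)
  finally show ?thesis using wd_diff[OF assms] by simp
qed

lemma wd_sq_nonneg:
  assumes "weak_deriv_on L u g"
  shows "integral {-L..L} (\<lambda>x. (g x)^2) \<ge> 0"
  by (rule integral_nonneg) (use wd_int[OF assms] in auto)

lemma wd_holder_abs:
  assumes "weak_deriv_on L u g" "x \<in> {-L..L}" "y \<in> {-L..L}"
  shows "\<bar>u x - u y\<bar> \<le> sqrt (integral {-L..L} (\<lambda>x. (g x)^2)) * sqrt \<bar>x - y\<bar>"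
proof -
  have "(u x - u y)^2 \<le> \<bar>x - y\<bar> * integral {-L..L} (\<lambda>x. (g x)^2)"
  proof (cases "y \<le> x")
    case True then show ?thesis using wd_holder[OF assms(1), of y x] assms by auto
  next
    case False then show ?thesis using wd_holder[OF assms(1), of x y] assms by (auto simp: power2_commute)
  qed
  then have "sqrt ((u x - u y)^2) \<le> sqrt (\<bar>x - y\<bar> * integral {-L..L} (\<lambda>x. (g x)^2))"
    using real_sqrt_le_mono by blast
  then show ?thesis by (simp add: real_sqrt_mult mult.commute)
qed

lemma ae_zero_intervals_borel:
  fixes h :: "real \<Rightarrow> real"
  assumes hi: "integrable lborel h" and hm: "h \<in> borel_measurable borel"
    and hz: "\<And>c. (\<integral>x. indicator {c<..} x * h x \<partial>lborel) = 0"
  shows "AE x in lborel. h x = 0"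
proof -
  define p where "p x = max (h x) 0" for x
  define n where "n x = max (- h x) 0" for x
  have pm[measurable]: "p \<in> borel_measurable borel" and nm[measurable]: "n \<in> borel_measurable borel"
    unfolding p_def n_def using hm by auto
  have pi: "integrable lborel p" and ni: "integrable lborel n"
    unfolding p_def n_def using hi by auto
  have pic: "integrable lborel (\<lambda>x. indicator {c<..} x * p x)" for c
    using integrable_mult_indicator[OF _ pi, of "{c<..}"] by simp
  have nic: "integrable lborel (\<lambda>x. indicator {c<..} x * n x)" for c
    using integrable_mult_indicator[OF _ ni, of "{c<..}"] by simp
  have eqint: "(\<integral>x. indicator {c<..} x * p x \<partial>lborel) = (\<integral>x. indicator {c<..} x * n x \<partial>lborel)" for c
  proof -
    have "(\<integral>x. indicator {c<..} x * p x \<partial>lborel) - (\<integral>x. indicator {c<..} x * n x \<partial>lborel)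
        = (\<integral>x. indicator {c<..} x * p x - indicator {c<..} x * n x \<partial>lborel)"
      using pic nic by simp
    also have "\<dots> = (\<integral>x. indicator {c<..} x * h x \<partial>lborel)"
      by (rule Bochner_Integration.integral_cong) (auto simp: p_def n_def split: split_indicator)
    finally show ?thesis using hz[of c] by simp
  qed
  have em: "emeasure (density lborel (\<lambda>x. ennreal (f x))) {c<..} = ennreal (\<integral>x. indicator {c<..} x * f x \<partial>lborel)"
    if fm[measurable]: "f \<in> borel_measurable borel" and f0: "\<And>x. f x \<ge> 0"
      and fi: "integrable lborel (\<lambda>x. indicator {c<..} x * f x)" for f :: "real \<Rightarrow> real" and c :: real
  proof -
    have "emeasure (density lborel (\<lambda>x. ennreal (f x))) {c<..} = (\<integral>\<^sup>+x. ennreal (f x) * indicator {c<..} x \<partial>lborel)"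
      by (rule emeasure_density) (auto intro: borel_open simp: open_greaterThan)
    also have "\<dots> = (\<integral>\<^sup>+x. ennreal (indicator {c<..} x * f x) \<partial>lborel)"
      by (rule nn_integral_cong) (auto split: split_indicator)
    also have "\<dots> = ennreal (\<integral>x. indicator {c<..} x * f x \<partial>lborel)"
      by (rule nn_integral_eq_integral[OF fi]) (use f0 in \<open>auto split: split_indicator\<close>)
    finally show ?thesis .
  qed
  have dens: "density lborel (\<lambda>x. ennreal (p x)) = density lborel (\<lambda>x. ennreal (n x))"
  proof (rule measure_eqI_lessThan)
    show "sets (density lborel (\<lambda>x. ennreal (p x))) = sets borel" by simp
    show "sets (density lborel (\<lambda>x. ennreal (n x))) = sets borel" by simp
    fix c
    show "emeasure (density lborel (\<lambda>x. ennreal (p x))) {c<..} < \<infinity>"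
      using em[OF pm _ pic] by (simp add: p_def)
    show "emeasure (density lborel (\<lambda>x. ennreal (p x))) {c<..} = emeasure (density lborel (\<lambda>x. ennreal (n x))) {c<..}"
      using em[OF pm _ pic] em[OF nm _ nic] eqint by (simp add: p_def n_def)
  qed
  have fin: "integral\<^sup>N lborel (\<lambda>x. ennreal (p x)) \<noteq> \<infinity>"
    using nn_integral_eq_integral[OF pi] by (simp add: p_def)
  have "AE x in lborel. ennreal (p x) = ennreal (n x)"
    using finite_density_unique[of "\<lambda>x. ennreal (p x)" lborel "\<lambda>x. ennreal (n x)"] dens fin by simp
  then show ?thesis
    by (rule AE_mp) (auto simp: p_def n_def intro!: AE_I2 split: if_splits)
qed

lemma wd_unique:
  assumes w1: "weak_deriv_on L u g1" and w2: "weak_deriv_on L u g2"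
  shows "\<exists>N. negligible N \<and> (\<forall>x\<in>{-L..L} - N. g1 x = g2 x)"
proof -
  define h where "h x = (if x \<in> {-L..L} then g1 x - g2 x else 0)" for x
  have gd: "(\<lambda>x. g1 x - g2 x) absolutely_integrable_on {-L..L}"
    using wd_int(3)[OF w1] wd_int(3)[OF w2] by (rule set_integral_diff(1))
  have habs: "h absolutely_integrable_on UNIV"
    unfolding h_def using gd absolutely_integrable_restrict_UNIV[of "{-L..L}" "\<lambda>x. g1 x - g2 x"] by simp
  have hint: "integrable lebesgue h"
    using habs unfolding set_integrable_def by simp
  have hmeas: "h \<in> borel_measurable (completion lborel)"
    using borel_measurable_integrable[OF hint] by simp
  obtain h' where h'm: "h' \<in> borel_measurable lborel" and hh': "AE x in lborel. h x = h' x"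
    using completion_ex_borel_measurable_real[OF hmeas] by blast
  have h'm2[measurable]: "h' \<in> borel_measurable borel" using h'm by simp
  have hh'c: "AE x in completion lborel. h x = h' x" by (rule AE_completion[OF hh'])
  have h'int_c: "integrable (completion lborel) h'"
    using integrable_cong_AE_imp[OF hint _ hh'c] measurable_completion[OF h'm] by simp
  have h'int: "integrable lborel h'"
    using h'int_c integrable_completion[OF h'm] by simp
  have hz: "(\<integral>x. indicator {c<..} x * h' x \<partial>lborel) = 0" for c
  proof -
    have ic: "integrable (completion lborel) (\<lambda>x. indicator {c<..} x * h x)"
      using integrable_mult_indicator[OF _ hint, of "{c<..}"] by simp
    have "(\<integral>x. indicator {c<..} x * h' x \<partial>lborel) = (\<integral>x. indicator {c<..} x * h' x \<partial>completion lborel)"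
      by (rule integral_completion[symmetric]) simp
    also have "\<dots> = (\<integral>x. indicator {c<..} x * h x \<partial>completion lborel)"
    proof (rule integral_cong_AE)
      show "(\<lambda>x. indicator {c<..} x * h' x) \<in> borel_measurable (completion lborel)"
        by (rule measurable_completion) simp
      show "(\<lambda>x. indicator {c<..} x * h x) \<in> borel_measurable (completion lborel)"
        using borel_measurable_integrable[OF ic] .
      show "AE x in completion lborel. indicator {c<..} x * h' x = indicator {c<..} x * h x"
        using hh'c by (rule AE_mp) (auto intro!: AE_I2)
    qed
    also have "\<dots> = integral UNIV (\<lambda>x. indicator {c<..} x * h x)"
    proof -
      have "set_integrable lebesgue UNIV (\<lambda>x. indicator {c<..} x * h x)"
        using ic unfolding set_integrable_def by simp
      from set_lebesgue_integral_eq_integral(2)[OF this] show ?thesis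
        by (simp add: set_lebesgue_integral_def)
    qed
    also have "\<dots> = integral UNIV (\<lambda>x. if x \<in> {max c (-L)..L} then g1 x - g2 x else 0)"
    proof (rule integral_spike[of "{c}"])
      fix x assume "x \<in> UNIV - {c}"
      then show "(if x \<in> {max c (-L)..L} then g1 x - g2 x else 0) = indicator {c<..} x * h x"
        by (auto simp: h_def indicator_def)
    qed auto
    also have "\<dots> = integral {max c (-L)..L} (\<lambda>x. g1 x - g2 x)"
      by (rule integral_restrict_UNIV)
    also have "\<dots> = 0"
    proof (cases "max c (-L) \<le> L")
      case True
      have i1: "g1 integrable_on {max c (-L)..L}" using wd_int_sub(1)[OF w1, of "max c (-L)" L] by simp
      have i2: "g2 integrable_on {max c (-L)..L}" using wd_int_sub(1)[OF w2, of "max c (-L)" L] by simp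
      have "integral {max c (-L)..L} (\<lambda>x. g1 x - g2 x) = integral {max c (-L)..L} g1 - integral {max c (-L)..L} g2"
        by (rule integral_diff[OF i1 i2])
      also have "\<dots> = (u L - u (max c (-L))) - (u L - u (max c (-L)))"
        using wd_diff[OF w1, of "max c (-L)" L] wd_diff[OF w2, of "max c (-L)" L] True by simp
      finally show ?thesis by simp
    next
      case False
      then show ?thesis by simp
    qed
    finally show ?thesis .
  qed
  have "AE x in lborel. h' x = 0"
    by (rule ae_zero_intervals_borel[OF h'int h'm2 hz])
  then have "AE x in lborel. h x = 0"
    using hh' by (rule AE_mp[OF _ AE_mp]) (auto intro!: AE_I2)
  then obtain N where N: "{x \<in> space lborel. \<not> h x = 0} \<subseteq> N" "emeasure lborel N = 0" "N \<in> sets lborel"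
    by (rule AE_E)
  have "N \<in> null_sets lebesgue"
    using N by (intro null_sets_completionI) (simp add: null_sets_def)
  then have "negligible N" by (simp add: negligible_iff_null_sets)
  moreover have "\<forall>x\<in>{-L..L} - N. g1 x = g2 x"
  proof
    fix x assume x: "x \<in> {-L..L} - N"
    then have "h x = 0" using N(1) by auto
    then show "g1 x = g2 x" using x by (simp add: h_def)
  qed
  ultimately show ?thesis by blast
qed

lemma wd_integral_eq:
  assumes w1: "weak_deriv_on L u g1" and w2: "weak_deriv_on L u g2"
  shows "integral {-L..L} (\<lambda>x. F x (g1 x)) = integral {-L..L} (\<lambda>x. F x (g2 x))"
proof -
  obtain N where "negligible N" "\<forall>x\<in>{-L..L} - N. g1 x = g2 x" using wd_unique[OF w1 w2] by blast
  then show ?thesis by (intro integral_spike[of N]) auto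
qed

lemma wderiv_wd:
  assumes "H1 L u"
  shows "weak_deriv_on L u (wderiv L u)"
  using assms unfolding H1_def wderiv_def by (rule someI_ex)

lemma cont_mult_absint:
  fixes f g :: "real \<Rightarrow> real"
  assumes "continuous_on {p..q} f" "g absolutely_integrable_on {p..q}"
  shows "(\<lambda>x. f x * g x) absolutely_integrable_on {p..q}"
proof (rule absolutely_integrable_bounded_measurable_product_real)
  show "f \<in> borel_measurable (lebesgue_on {p..q})"
    by (rule continuous_imp_measurable_on_sets_lebesgue[OF assms(1)]) simp
  show "bounded (f ` {p..q})"
    by (rule compact_imp_bounded, rule compact_continuous_image[OF assms(1)]) simp
qed (use assms in auto)

lemma sq_absint:
  assumes "weak_deriv_on L u g"
  shows "(\<lambda>x. (g x)^2) absolutely_integrable_on {-L..L}"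
  using wd_int(2)[OF assms] absolutely_integrable_on_iff_nonneg[of "{-L..L}" "\<lambda>x. (g x)^2"] by simp

lemma cont_min_pos:
  fixes f :: "real \<Rightarrow> real"
  assumes "continuous_on {p..q} f" "\<And>x. f x > 0"
  shows "\<exists>c>0. \<forall>x\<in>{p..q}. f x \<ge> c"
proof (cases "p \<le> q")
  case True
  obtain x0 where "x0 \<in> {p..q}" "\<forall>x\<in>{p..q}. f x0 \<le> f x"
    using continuous_attains_inf[OF compact_Icc _ assms(1)] True by auto
  then show ?thesis using assms(2)[of x0] by blast
next
  case False then show ?thesis by (intro exI[of _ 1]) auto
qed

lemma cont_max:
  fixes f :: "real \<Rightarrow> real"
  assumes "continuous_on {p..q} f"
  shows "\<exists>c. \<forall>x\<in>{p..q}. \<bar>f x\<bar> \<le> c"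
proof -
  have "bounded (f ` {p..q})"
    by (rule compact_imp_bounded, rule compact_continuous_image[OF assms(1)]) simp
  then show ?thesis unfolding bounded_iff by auto
qed

locale setting =
  fixes a b G :: "real \<Rightarrow> real" and L :: real
  assumes a_c: "continuous_on UNIV a" and a_p: "\<And>x. a x > 0"
    and b_c: "continuous_on UNIV b" and b_p: "\<And>x. b x > 0"
    and G_c: "continuous_on UNIV G" and G_nn: "\<And>s. G s \<ge> 0"
    and L_p: "L > 0"
begin

definition quad :: "(real \<Rightarrow> real) \<Rightarrow> real" where
  "quad g = integral {-L..L} (\<lambda>x. a x * (g x)^2)"

definition pot :: "(real \<Rightarrow> real) \<Rightarrow> real" where
  "pot u = integral {-L..L} (\<lambda>x. G (u x) * b x)"

lemma a_ci: "continuous_on S a" using a_c by (rule continuous_on_subset) auto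
lemma b_ci: "continuous_on S b" using b_c by (rule continuous_on_subset) auto
lemma G_ci: "continuous_on S G" using G_c by (rule continuous_on_subset) auto

lemma quad_absint:
  assumes "weak_deriv_on L u g"
  shows "(\<lambda>x. a x * (g x)^2) absolutely_integrable_on {-L..L}"
  by (rule cont_mult_absint[OF a_ci sq_absint[OF assms]])

lemma quad_int:
  assumes "weak_deriv_on L u g"
  shows "(\<lambda>x. a x * (g x)^2) integrable_on {-L..L}"
  using quad_absint[OF assms] by (simp add: absolutely_integrable_on_def)

lemma pot_cont:
  assumes "continuous_on {-L..L} u"
  shows "continuous_on {-L..L} (\<lambda>x. G (u x) * b x)"
  by (intro continuous_intros continuous_on_compose2[OF G_c assms] b_ci) auto

lemma pot_int:
  assumes "continuous_on {-L..L} u"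
  shows "(\<lambda>x. G (u x) * b x) integrable_on {-L..L}"
  using pot_cont[OF assms] by (rule integrable_continuous_real)

lemma pot_nn: "continuous_on {-L..L} u \<Longrightarrow> pot u \<ge> 0"
  unfolding pot_def by (rule integral_nonneg[OF pot_int]) (auto intro: mult_nonneg_nonneg G_nn less_imp_le[OF b_p])

lemma quad_nn: "weak_deriv_on L u g \<Longrightarrow> quad g \<ge> 0"
  unfolding quad_def by (rule integral_nonneg[OF quad_int]) (auto intro: mult_nonneg_nonneg less_imp_le[OF a_p])

lemma energy_split:
  assumes w: "weak_deriv_on L u g"
  shows "energy a b G L u = (1/2) * quad g + pot u"
proof -
  have H: "H1 L u" using w unfolding H1_def by blast
  have w': "weak_deriv_on L u (wderiv L u)" by (rule wderiv_wd[OF H])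
  have "energy a b G L u = integral {-L..L} (\<lambda>x. (1/2) * (g x)\<^sup>2 * a x + G (u x) * b x)"
    unfolding energy_def using wd_integral_eq[OF w' w, of "\<lambda>x y. (1/2) * y\<^sup>2 * a x + G (u x) * b x"] by simp
  also have "\<dots> = integral {-L..L} (\<lambda>x. (1/2) * (a x * (g x)\<^sup>2)) + integral {-L..L} (\<lambda>x. G (u x) * b x)"
  proof -
    have "(\<lambda>x. (1/2) * (a x * (g x)\<^sup>2)) integrable_on {-L..L}"
      by (rule integrable_on_mult_right[OF quad_int[OF w]])
    then show ?thesis
      using integral_add[OF _ pot_int[OF wd_cont[OF w]], of "\<lambda>x. (1/2) * (a x * (g x)\<^sup>2)"]
      by (simp add: algebra_simps)
  qed
  also have "\<dots> = (1/2) * quad g + pot u"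
    unfolding quad_def pot_def by simp
  finally show ?thesis .
qed

lemma amin: "\<exists>c>0. \<forall>x\<in>{-L..L}. a x \<ge> c"
  using cont_min_pos[OF a_ci a_p] .

lemma quad_lower:
  assumes w: "weak_deriv_on L u g"
  obtains c where "c > 0" "c * integral {-L..L} (\<lambda>x. (g x)^2) \<le> quad g"
proof -
  obtain c where c: "c > 0" "\<forall>x\<in>{-L..L}. a x \<ge> c" using amin by blast
  have "integral {-L..L} (\<lambda>x. c * (g x)^2) \<le> quad g"
    unfolding quad_def
    by (rule integral_le) (use c wd_int(2)[OF w] quad_int[OF w] in \<open>auto intro: mult_right_mono integrable_on_mult_right\<close>)
  then show ?thesis using c that by simp
qed

end

lemma fatou_real:
  fixes f :: "nat \<Rightarrow> 'a \<Rightarrow> real"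
  assumes fm: "\<And>k. f k \<in> borel_measurable M" and Fm: "F \<in> borel_measurable M"
    and f0: "\<And>k x. f k x \<ge> 0" and fi: "\<And>k. integrable M (f k)"
    and fC: "\<And>k. (\<integral>x. f k x \<partial>M) \<le> C"
    and lim: "AE x in M. (\<lambda>k. f k x) \<longlonglongrightarrow> F x"
  shows "integrable M F \<and> (\<integral>x. F x \<partial>M) \<le> C"
proof -
  have C0: "C \<ge> 0" using fC[of 0] integral_nonneg_AE[of "f 0" M] f0 by (meson AE_I2 order_trans)
  have F0: "AE x in M. F x \<ge> 0"
    using lim by (rule AE_mp) (auto intro!: AE_I2 LIMSEQ_le_const f0)
  have "(\<integral>\<^sup>+x. ennreal (F x) \<partial>M) = (\<integral>\<^sup>+x. liminf (\<lambda>k. ennreal (f k x)) \<partial>M)"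
  proof (rule nn_integral_cong_AE)
    show "AE x in M. ennreal (F x) = liminf (\<lambda>k. ennreal (f k x))"
      using lim
    proof (rule AE_mp, intro AE_I2 impI)
      fix x assume "(\<lambda>k. f k x) \<longlonglongrightarrow> F x"
      then have t: "(\<lambda>k. ennreal (f k x)) \<longlonglongrightarrow> ennreal (F x)" by (rule tendsto_ennrealI)
      show "ennreal (F x) = liminf (\<lambda>k. ennreal (f k x))"
        using lim_imp_Liminf[OF _ t] by simp
    qed
  qed
  also have "\<dots> \<le> liminf (\<lambda>k. \<integral>\<^sup>+x. ennreal (f k x) \<partial>M)"
    by (rule nn_integral_liminf) (use fm in simp)
  also have "\<dots> = liminf (\<lambda>k. ennreal (\<integral>x. f k x \<partial>M))"
    by (subst nn_integral_eq_integral[OF fi]) (auto simp: f0)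
  also have "\<dots> \<le> ennreal C"
  proof -
    have "liminf (\<lambda>k. ennreal (\<integral>x. f k x \<partial>M)) \<le> limsup (\<lambda>k. ennreal (\<integral>x. f k x \<partial>M))"
      by (rule Liminf_le_Limsup) simp
    also have "\<dots> \<le> ennreal C"
      by (rule Limsup_bounded) (use fC in \<open>auto intro!: always_eventually ennreal_leI\<close>)
    finally show ?thesis .
  qed
  finally have le: "(\<integral>\<^sup>+x. ennreal (F x) \<partial>M) \<le> ennreal C" .
  have Fi: "integrable M F"
  proof (rule integrableI_bounded)
    show "(\<integral>\<^sup>+x. ennreal (norm (F x)) \<partial>M) < \<infinity>"
    proof -
      have "(\<integral>\<^sup>+x. ennreal (norm (F x)) \<partial>M) = (\<integral>\<^sup>+x. ennreal (F x) \<partial>M)"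
        by (rule nn_integral_cong_AE, rule AE_mp[OF F0]) (auto intro!: AE_I2)
      then show ?thesis using le by (simp add: le_less_trans)
    qed
  qed (rule Fm)
  have "ennreal (\<integral>x. F x \<partial>M) \<le> ennreal C"
    using le nn_integral_eq_integral[OF Fi F0] by simp
  then have "(\<integral>x. F x \<partial>M) \<le> C" using C0 by (simp add: ennreal_le_iff)
  with Fi show ?thesis by simp
qed

lemma ae_lim:
  fixes h :: "nat \<Rightarrow> 'a \<Rightarrow> real"
  assumes hi: "\<And>k. integrable M (h k)"
    and fast: "\<And>k. (\<integral>x. \<bar>h (Suc k) x - h k x\<bar> \<partial>M) \<le> K * (1/2)^k"
  shows "\<exists>D. integrable M D \<and> (AE x in M. convergent (\<lambda>k. h k x) \<and> (\<forall>k. \<bar>h k x\<bar> \<le> D x))"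
proof -
  define d where "d k x = \<bar>h (Suc k) x - h k x\<bar>" for k x
  have hm[measurable]: "h k \<in> borel_measurable M" for k using hi by (rule borel_measurable_integrable)
  have dm[measurable]: "d k \<in> borel_measurable M" for k unfolding d_def by measurable
  have di: "integrable M (d k)" for k unfolding d_def using hi by auto
  have K0: "K \<ge> 0"
  proof -
    have "0 \<le> (\<integral>x. d 0 x \<partial>M)" by (rule integral_nonneg_AE) (auto simp: d_def)
    moreover have "(\<integral>x. d 0 x \<partial>M) \<le> K" using fast[of 0] by (simp add: d_def)
    ultimately show ?thesis by linarith
  qed
  define F where "F x = (\<Sum>k. ennreal (d k x))" for x
  have Fm[measurable]: "F \<in> borel_measurable M" unfolding F_def by measurable
  have "(\<integral>\<^sup>+x. F x \<partial>M) = (\<Sum>k. \<integral>\<^sup>+x. ennreal (d k x) \<partial>M)"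
    unfolding F_def by (rule nn_integral_suminf) simp
  also have "\<dots> = (\<Sum>k. ennreal (\<integral>x. d k x \<partial>M))"
    by (subst nn_integral_eq_integral[OF di]) (auto simp: d_def)
  also have "\<dots> \<le> (\<Sum>k. ennreal (K * (1/2)^k))"
    by (intro suminf_le summableI) (use fast in \<open>auto simp: d_def ennreal_leI\<close>)
  also have "\<dots> = ennreal (\<Sum>k. K * (1/2)^k)"
    by (rule suminf_ennreal2) (use K0 in \<open>auto intro!: summable_mult summable_geometric\<close>)
  finally have Fint: "(\<integral>\<^sup>+x. F x \<partial>M) \<le> ennreal (\<Sum>k. K * (1/2)^k)" .
  then have Ffin: "(\<integral>\<^sup>+x. F x \<partial>M) \<noteq> \<infinity>" by (auto simp: top_unique)
  have aeF: "AE x in M. F x \<noteq> \<infinity>" by (rule nn_integral_PInf_AE[OF Fm Ffin])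
  define D where "D x = \<bar>h 0 x\<bar> + enn2real (F x)" for x
  have Dm[measurable]: "D \<in> borel_measurable M" unfolding D_def by measurable
  have E2: "integrable M (\<lambda>x. enn2real (F x))"
  proof (rule integrableI_bounded)
    have "(\<integral>\<^sup>+x. ennreal (norm (enn2real (F x))) \<partial>M) = (\<integral>\<^sup>+x. F x \<partial>M)"
      by (rule nn_integral_cong_AE) (use aeF in \<open>auto elim!: AE_mp intro!: AE_I2 simp: less_top ennreal_enn2real_if\<close>)
    then show "(\<integral>\<^sup>+x. ennreal (norm (enn2real (F x))) \<partial>M) < \<infinity>" using Ffin by (simp add: less_top)
  qed simp
  have Di: "integrable M D" unfolding D_def using hi[of 0] E2 by auto
  have "AE x in M. convergent (\<lambda>k. h k x) \<and> (\<forall>k. \<bar>h k x\<bar> \<le> D x)"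
    using aeF
  proof (rule AE_mp, intro AE_I2 impI)
    fix x assume Fx: "F x \<noteq> \<infinity>"
    have sd: "summable (\<lambda>k. d k x)"
      by (rule summable_suminf_not_top) (use Fx in \<open>auto simp: F_def d_def\<close>)
    have Feq: "F x = ennreal (\<Sum>k. d k x)"
      unfolding F_def by (rule suminf_ennreal2) (use sd in \<open>auto simp: d_def\<close>)
    have sdiff: "summable (\<lambda>k. h (Suc k) x - h k x)"
      by (rule summable_rabs_cancel) (use sd in \<open>simp add: d_def\<close>)
    have tel: "h k x = h 0 x + (\<Sum>i<k. h (Suc i) x - h i x)" for k
      using sum_lessThan_telescope[of "\<lambda>i. h i x" k] by simp
    have "(\<lambda>k. h 0 x + (\<Sum>i<k. h (Suc i) x - h i x)) \<longlonglongrightarrow> h 0 x + (\<Sum>i. h (Suc i) x - h i x)"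
      by (intro tendsto_add tendsto_const summable_LIMSEQ sdiff)
    then have "convergent (\<lambda>k. h k x)" unfolding tel[symmetric] by (auto simp: convergent_def)
    moreover have "\<bar>h k x\<bar> \<le> D x" for k
    proof -
      have "\<bar>h k x\<bar> \<le> \<bar>h 0 x\<bar> + \<bar>\<Sum>i<k. h (Suc i) x - h i x\<bar>"
        by (subst tel) (rule abs_triangle_ineq)
      also have "\<bar>\<Sum>i<k. h (Suc i) x - h i x\<bar> \<le> (\<Sum>i<k. d i x)"
        unfolding d_def by (rule sum_abs)
      also have "(\<Sum>i<k. d i x) \<le> (\<Sum>i. d i x)"
        by (rule sum_le_suminf[OF sd]) (auto simp: d_def)
      also have "(\<Sum>i. d i x) = enn2real (F x)"
      proof -
        have "0 \<le> (\<Sum>i. d i x)" by (rule suminf_nonneg[OF sd]) (simp add: d_def)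
        then show ?thesis using Feq by simp
      qed
      finally show ?thesis by (simp add: D_def)
    qed
    ultimately show "convergent (\<lambda>k. h k x) \<and> (\<forall>k. \<bar>h k x\<bar> \<le> D x)" by blast
  qed
  with Di show ?thesis by blast
qed

lemma Icc_sets_lon: "p \<le> y \<Longrightarrow> y \<le> q \<Longrightarrow> {p..y} \<in> sets (lebesgue_on {p..(q::real)})"
  by (subst sets_restrict_space_iff) auto

lemma lint_ind:
  fixes f :: "real \<Rightarrow> real"
  assumes fi: "integrable (lebesgue_on {p..q}) f" and py: "p \<le> y" "y \<le> q"
  shows "(\<integral>x. indicator {p..y} x * f x \<partial>lebesgue_on {p..q}) = integral {p..y} f"
proof -
  have ii: "integrable (lebesgue_on {p..q}) (\<lambda>x. indicator {p..y} x * f x)"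
    using integrable_real_mult_indicator[OF Icc_sets_lon[OF py] fi] by (simp add: mult.commute)
  have "(\<integral>x. indicator {p..y} x * f x \<partial>lebesgue_on {p..q}) = integral {p..q} (\<lambda>x. indicator {p..y} x * f x)"
    by (rule lebesgue_integral_eq_integral[OF ii]) simp
  also have "\<dots> = integral {p..q} (\<lambda>x. if x \<in> {p..y} then f x else 0)"
    by (rule integral_cong) (simp add: indicator_def)
  also have "\<dots> = integral ({p..y} \<inter> {p..q}) f" by (rule Henstock_Kurzweil_Integration.integral_restrict_Int)
  also have "{p..y} \<inter> {p..q} = {p..y}" using py by auto
  finally show ?thesis .
qed

lemma absint_iff_lon:
  fixes f :: "real \<Rightarrow> real"
  shows "f absolutely_integrable_on {p..q} \<longleftrightarrow> integrable (lebesgue_on {p..q}) f"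
proof
  assume "f absolutely_integrable_on {p..q}"
  then show "integrable (lebesgue_on {p..q}) f" by (rule absolutely_integrable_imp_integrable) simp
next
  assume f: "integrable (lebesgue_on {p..q}) f"
  show "f absolutely_integrable_on {p..q}"
    by (subst absolutely_integrable_measurable_real) (use f in auto)
qed

context setting
begin

lemma L2_limit:
  fixes h :: "nat \<Rightarrow> real \<Rightarrow> real"
  assumes hi: "\<And>k. h k absolutely_integrable_on {-L..L}"
    and hai: "\<And>k. (\<lambda>x. a x * (h k x)^2) integrable_on {-L..L}"
    and hC: "\<And>k. integral {-L..L} (\<lambda>x. a x * (h k x)^2) \<le> C"
    and fast: "\<And>k. integral {-L..L} (\<lambda>x. \<bar>h (Suc k) x - h k x\<bar>) \<le> K * (1/2)^k"
  shows "\<exists>g. g absolutely_integrable_on {-L..L} \<and> (\<lambda>x. (g x)^2) integrable_on {-L..L} \<and> quad g \<le> C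
     \<and> (\<forall>y\<in>{-L..L}. (\<lambda>k. integral {-L..y} (h k)) \<longlonglongrightarrow> integral {-L..y} g)"
proof -
  let ?M = "lebesgue_on {-L..L}"
  have hM: "integrable ?M (h k)" for k using hi[of k] absint_iff_lon by blast
  have hm[measurable]: "h k \<in> borel_measurable ?M" for k using hM by (rule borel_measurable_integrable)
  have fastM: "(\<integral>x. \<bar>h (Suc k) x - h k x\<bar> \<partial>?M) \<le> K * (1/2)^k" for k
  proof -
    have "integrable ?M (\<lambda>x. \<bar>h (Suc k) x - h k x\<bar>)" using hM by auto
    then have "(\<integral>x. \<bar>h (Suc k) x - h k x\<bar> \<partial>?M) = integral {-L..L} (\<lambda>x. \<bar>h (Suc k) x - h k x\<bar>)"
      by (rule lebesgue_integral_eq_integral) simp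
    then show ?thesis using fast[of k] by simp
  qed
  obtain D where Di: "integrable ?M D" and aeD: "AE x in ?M. convergent (\<lambda>k. h k x) \<and> (\<forall>k. \<bar>h k x\<bar> \<le> D x)"
    using ae_lim[OF hM fastM] by blast
  define g where "g x = lim (\<lambda>k. h k x)" for x
  have gm[measurable]: "g \<in> borel_measurable ?M" unfolding g_def by measurable
  have glim: "AE x in ?M. (\<lambda>k. h k x) \<longlonglongrightarrow> g x"
    using aeD by (rule AE_mp) (auto intro!: AE_I2 simp: g_def convergent_LIMSEQ_iff)
  have bnd: "AE x in ?M. norm (h k x) \<le> D x" for k
    using aeD by (rule AE_mp) (auto intro!: AE_I2)
  have gM: "integrable ?M g"
    by (rule integrable_dominated_convergence[OF gm hm Di glim bnd])
  have gabs: "g absolutely_integrable_on {-L..L}" using gM absint_iff_lon by blast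
  have conv: "(\<lambda>k. integral {-L..y} (h k)) \<longlonglongrightarrow> integral {-L..y} g" if y: "y \<in> {-L..L}" for y
  proof -
    have yy: "-L \<le> y" "y \<le> L" using y by auto
    have "(\<lambda>k. \<integral>x. indicator {-L..y} x * h k x \<partial>?M) \<longlonglongrightarrow> (\<integral>x. indicator {-L..y} x * g x \<partial>?M)"
    proof (rule integral_dominated_convergence[OF _ _ Di])
      show "(\<lambda>x. indicator {-L..y} x * g x) \<in> borel_measurable ?M"
        using borel_measurable_integrable[OF integrable_real_mult_indicator[OF Icc_sets_lon[OF yy] gM]]
        by (simp add: mult.commute)
      show "(\<lambda>x. indicator {-L..y} x * h k x) \<in> borel_measurable ?M" for k
        using borel_measurable_integrable[OF integrable_real_mult_indicator[OF Icc_sets_lon[OF yy] hM]]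
        by (simp add: mult.commute)
      show "AE x in ?M. (\<lambda>k. indicator {-L..y} x * h k x) \<longlonglongrightarrow> indicator {-L..y} x * g x"
        using glim by (rule AE_mp) (auto intro!: AE_I2 tendsto_mult_left)
      show "AE x in ?M. norm (indicator {-L..y} x * h k x) \<le> D x" for k
        using aeD by (rule AE_mp) (auto intro!: AE_I2 simp: indicator_def abs_mult order_trans[OF _ abs_ge_zero])
    qed
    then show ?thesis using lint_ind[OF hM yy] lint_ind[OF gM yy] by simp
  qed
  define F where "F x = a x * (g x)^2" for x
  have am[measurable]: "a \<in> borel_measurable ?M"
    by (rule continuous_imp_measurable_on_sets_lebesgue[OF a_ci]) simp
  have Fm[measurable]: "F \<in> borel_measurable ?M" unfolding F_def by measurable
  have fk: "integrable ?M (\<lambda>x. a x * (h k x)^2) \<and> (\<integral>x. a x * (h k x)^2 \<partial>?M) \<le> C" for k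
  proof -
    have "(\<lambda>x. a x * (h k x)^2) absolutely_integrable_on {-L..L}"
      using hai[of k] absolutely_integrable_on_iff_nonneg[of "{-L..L}" "\<lambda>x. a x * (h k x)^2"]
      by (simp add: less_imp_le[OF a_p])
    then have i: "integrable ?M (\<lambda>x. a x * (h k x)^2)" using absint_iff_lon by blast
    have "(\<integral>x. a x * (h k x)^2 \<partial>?M) = integral {-L..L} (\<lambda>x. a x * (h k x)^2)"
      by (rule lebesgue_integral_eq_integral[OF i]) simp
    then show ?thesis using i hC[of k] by simp
  qed
  have FF: "integrable ?M F \<and> (\<integral>x. F x \<partial>?M) \<le> C"
  proof (rule fatou_real[of "\<lambda>k x. a x * (h k x)^2"])
    show "\<And>k x. 0 \<le> a x * (h k x)^2" by (simp add: less_imp_le[OF a_p])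
    show "AE x in ?M. (\<lambda>k. a x * (h k x)\<^sup>2) \<longlonglongrightarrow> F x"
      using glim by (rule AE_mp) (auto intro!: AE_I2 tendsto_intros simp: F_def)
  qed (use fk in auto)
  have "integral {-L..L} F = (\<integral>x. F x \<partial>?M)"
    by (rule lebesgue_integral_eq_integral[symmetric]) (use FF in auto)
  then have qC: "quad g \<le> C" using FF unfolding quad_def F_def by simp
  obtain c where c: "c > 0" "\<forall>x\<in>{-L..L}. a x \<ge> c" using amin by blast
  have g2: "integrable ?M (\<lambda>x. (g x)^2)"
  proof (rule Bochner_Integration.integrable_bound[where f="\<lambda>x. F x / c"])
    show "integrable ?M (\<lambda>x. F x / c)" using FF by simp
    show "(\<lambda>x. (g x)^2) \<in> borel_measurable ?M" by measurable
    show "AE x in ?M. norm ((g x)^2) \<le> norm (F x / c)"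
    proof (rule AE_I2)
      fix x assume "x \<in> space ?M"
      then have ax: "a x \<ge> c" using c by simp
      have "(g x)^2 \<le> a x * (g x)^2 / c"
        using ax c by (simp add: field_simps mult_right_mono)
      then show "norm ((g x)^2) \<le> norm (F x / c)"
        using c a_p[of x] by (simp add: F_def)
    qed
  qed
  have g2I: "(\<lambda>x. (g x)^2) integrable_on {-L..L}" by (rule integrable_on_lebesgue_on[OF g2]) simp
  show ?thesis using gabs g2I qC conv by blast
qed

end

lemma spike_right:
  fixes f \<phi> :: "real \<Rightarrow> real"
  assumes "\<phi> integrable_on {p..q}" "\<And>x. x \<in> {p..<q} \<Longrightarrow> f x = \<phi> x"
  shows "f integrable_on {p..q} \<and> integral {p..q} f = integral {p..q} \<phi>"
proof -
  have e: "\<And>x. x \<in> {p..q} - {q} \<Longrightarrow> \<phi> x = f x" using assms(2) by auto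
  have e2: "\<And>x. x \<in> {p..q} - {q} \<Longrightarrow> f x = \<phi> x" using assms(2) by auto
  have "f integrable_on {p..q}" by (rule integrable_spike[OF assms(1) negligible_sing e2])
  moreover have "integral {p..q} f = integral {p..q} \<phi>"
    by (rule integral_spike[OF negligible_sing e])
  ultimately show ?thesis by blast
qed

context setting
begin

definition dl :: "nat \<Rightarrow> real" where "dl n = 2 * L / 2^n"
definition tp :: "nat \<Rightarrow> nat \<Rightarrow> real" where "tp n j = -L + real j * dl n"
definition wt :: "nat \<Rightarrow> nat \<Rightarrow> real" where "wt n j = integral {tp n j..tp n (Suc j)} (\<lambda>x. 1 / a x)"
definition dU :: "(real \<Rightarrow> real) \<Rightarrow> nat \<Rightarrow> nat \<Rightarrow> real" where "dU u n j = u (tp n (Suc j)) - u (tp n j)"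
definition Q :: "(real \<Rightarrow> real) \<Rightarrow> nat \<Rightarrow> real" where "Q u n = (\<Sum>j<2^n. (dU u n j)^2 / wt n j)"
definition cc :: "(real \<Rightarrow> real) \<Rightarrow> nat \<Rightarrow> nat \<Rightarrow> real" where "cc u n j = dU u n j / wt n j"
definition hh :: "(real \<Rightarrow> real) \<Rightarrow> nat \<Rightarrow> real \<Rightarrow> real" where
  "hh u n x = (\<Sum>j<2^n. indicator {tp n j..<tp n (Suc j)} x * cc u n j) / a x"

lemma dl_pos: "dl n > 0" using L_p by (simp add: dl_def)

lemma tp_le_iff: "tp n i \<le> tp n k \<longleftrightarrow> i \<le> k"
  using dl_pos[of n] by (simp add: tp_def)

lemma tp_less_iff: "tp n i < tp n k \<longleftrightarrow> i < k"
  using dl_pos[of n] by (simp add: tp_def)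

lemma tp_mono: "tp n j \<le> tp n (Suc j)" by (simp add: tp_le_iff)

lemma tp0[simp]: "tp n 0 = -L" by (simp add: tp_def)
lemma tpN[simp]: "tp n (2^n) = L" by (simp add: tp_def dl_def)

lemma tp_in: "j \<le> 2^n \<Longrightarrow> tp n j \<in> {-L..L}"
  using tp_le_iff[of n 0 j] tp_le_iff[of n j "2^n"] by simp

lemma tp_refine: "tp n j = tp (n + d) (j * 2^d)"
  by (simp add: tp_def dl_def power_add field_simps)

lemma inva_int: "(\<lambda>x. 1 / a x) integrable_on {p..q}"
  by (rule integrable_continuous_real) (intro continuous_intros a_ci, use a_p in \<open>auto simp: less_imp_neq[symmetric]\<close>)

lemma inva_cont: "continuous_on S (\<lambda>x. 1 / a x)"
  by (intro continuous_intros a_ci) (use a_p in \<open>auto simp: less_imp_neq[symmetric]\<close>)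

lemma wt_pos: "wt n j > 0"
proof -
  have lt: "tp n j < tp n (Suc j)" by (simp add: tp_less_iff)
  have ge: "wt n j \<ge> 0" unfolding wt_def
    by (rule integral_nonneg[OF inva_int]) (simp add: less_imp_le[OF a_p])
  have "wt n j \<noteq> 0"
  proof
    assume "wt n j = 0"
    then have "\<forall>x\<in>{tp n j..tp n (Suc j)}. 1 / a x = 0"
      using integral_eq_0_iff[OF inva_cont lt] a_p unfolding wt_def by (simp add: less_imp_le)
    then show False using a_p[of "tp n j"] lt by auto
  qed
  with ge show ?thesis by simp
qed

lemma piecewise_int:
  fixes f :: "real \<Rightarrow> real" and \<phi> :: "nat \<Rightarrow> real \<Rightarrow> real"
  assumes eq: "\<And>j x. j < 2^n \<Longrightarrow> x \<in> {tp n j..<tp n (Suc j)} \<Longrightarrow> f x = \<phi> j x"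
    and pi: "\<And>j. j < 2^n \<Longrightarrow> \<phi> j integrable_on {tp n j..tp n (Suc j)}"
  shows "f integrable_on {-L..L} \<and> integral {-L..L} f = (\<Sum>j<2^n. integral {tp n j..tp n (Suc j)} (\<phi> j))"
proof -
  have sp: "f integrable_on {tp n j..tp n (Suc j)} \<and> integral {tp n j..tp n (Suc j)} f = integral {tp n j..tp n (Suc j)} (\<phi> j)"
    if "j < 2^n" for j
    by (rule spike_right[OF pi[OF that]]) (use eq that in auto)
  have "f integrable_on {tp n 0..tp n (2^n)} \<and> integral {tp n 0..tp n (2^n)} f = (\<Sum>j<2^n. integral {tp n j..tp n (Suc j)} f)"
    by (rule partition_integral[where t="tp n", OF tp_mono]) (use sp in auto)
  then show ?thesis using sp by simp
qed

lemma hh_on: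
  assumes j: "j < 2^n" and x: "x \<in> {tp n j..<tp n (Suc j)}"
  shows "hh u n x = cc u n j / a x"
proof -
  have "indicator {tp n i..<tp n (Suc i)} x = (if i = j then 1 else (0::real))" if "i < 2^n" for i
  proof (cases "i = j")
    case True then show ?thesis using x by simp
  next
    case False
    then have "i < j \<or> j < i" by arith
    then have "x \<notin> {tp n i..<tp n (Suc i)}"
    proof
      assume "i < j"
      then have "tp n (Suc i) \<le> tp n j" by (simp add: tp_le_iff)
      then show ?thesis using x by auto
    next
      assume "j < i"
      then have "tp n (Suc j) \<le> tp n i" by (simp add: tp_le_iff)
      then show ?thesis using x by auto
    qed
    then show ?thesis using False by simp
  qed
  then have "(\<Sum>i<2^n. indicator {tp n i..<tp n (Suc i)} x * cc u n i) = (\<Sum>i<2^n. (if i = j then cc u n i else 0))"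
    by (intro sum.cong) auto
  also have "\<dots> = cc u n j" using j by simp
  finally show ?thesis by (simp add: hh_def)
qed

lemma hh_I:
  assumes j: "j < 2^n"
  shows "hh u n integrable_on {tp n j..tp n (Suc j)} \<and> integral {tp n j..tp n (Suc j)} (hh u n) = dU u n j"
proof -
  have "hh u n integrable_on {tp n j..tp n (Suc j)} \<and> integral {tp n j..tp n (Suc j)} (hh u n) = integral {tp n j..tp n (Suc j)} (\<lambda>x. cc u n j * (1 / a x))"
  proof (rule spike_right)
    show "(\<lambda>x. cc u n j * (1 / a x)) integrable_on {tp n j..tp n (Suc j)}"
      by (rule integrable_on_mult_right[OF inva_int])
  qed (use hh_on[OF j] in auto)
  moreover have "integral {tp n j..tp n (Suc j)} (\<lambda>x. cc u n j * (1 / a x)) = dU u n j"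
  proof -
    have "integral {tp n j..tp n (Suc j)} (\<lambda>x. cc u n j * (1 / a x)) = cc u n j * wt n j"
      unfolding wt_def by (rule integral_mult_right)
    then show ?thesis using wt_pos[of n j] by (simp add: cc_def)
  qed
  ultimately show ?thesis by simp
qed

lemma hh_grid:
  assumes k: "k \<le> 2^n"
  shows "hh u n integrable_on {-L..tp n k} \<and> integral {-L..tp n k} (hh u n) = u (tp n k) - u (-L)"
proof -
  have "hh u n integrable_on {tp n 0..tp n k} \<and> integral {tp n 0..tp n k} (hh u n) = (\<Sum>j<k. integral {tp n j..tp n (Suc j)} (hh u n))"
    by (rule partition_integral[where t="tp n", OF tp_mono]) (use hh_I k in auto)
  moreover have "(\<Sum>j<k. integral {tp n j..tp n (Suc j)} (hh u n)) = (\<Sum>j<k. dU u n j)"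
    by (rule sum.cong) (use hh_I k in auto)
  moreover have "(\<Sum>j<k. dU u n j) = u (tp n k) - u (tp n 0)"
    unfolding dU_def using sum_lessThan_telescope[of "\<lambda>j. u (tp n j)" k] by simp
  ultimately show ?thesis by simp
qed

lemma hh_intL: "hh u n integrable_on {-L..L}"
  using hh_grid[of "2^n" n u] by simp

lemma hh_coarse:
  assumes nm: "n \<le> m" and j: "j < 2^n"
  shows "hh u m integrable_on {tp n j..tp n (Suc j)} \<and> integral {tp n j..tp n (Suc j)} (hh u m) = dU u n j"
proof -
  obtain d where m: "m = n + d" using nm le_Suc_ex by blast
  have sj: "Suc j \<le> 2^n" using j by simp
  have ia2: "Suc j * 2^d \<le> 2^n * 2^d" by (rule mult_le_mono1[OF sj])
  have ia1: "j * 2^d \<le> Suc j * 2^d" by simp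
  have ia: "j * 2^d \<le> 2^m" "Suc j * 2^d \<le> 2^m"
    using ia1 ia2 unfolding m power_add by linarith+
  have e1: "tp n j = tp m (j * 2^d)" and e2: "tp n (Suc j) = tp m (Suc j * 2^d)"
    unfolding m by (rule tp_refine)+
  have g1: "integral {-L..tp n j} (hh u m) = u (tp n j) - u (-L)"
    using hh_grid[OF ia(1), of u] e1 by simp
  have g2: "hh u m integrable_on {-L..tp n (Suc j)}" "integral {-L..tp n (Suc j)} (hh u m) = u (tp n (Suc j)) - u (-L)"
    using hh_grid[OF ia(2), of u] e2 by simp_all
  have le1: "-L \<le> tp n j" using tp_in[of j n] j by simp
  have sub: "hh u m integrable_on {tp n j..tp n (Suc j)}"
    by (rule integrable_subinterval_real[OF g2(1)]) (use le1 in auto)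
  have "integral {-L..tp n j} (hh u m) + integral {tp n j..tp n (Suc j)} (hh u m) = integral {-L..tp n (Suc j)} (hh u m)"
    by (rule hk_integral_combine[OF le1 tp_mono g2(1)])
  then show ?thesis using g1 g2(2) sub by (simp add: dU_def)
qed

lemma cross:
  assumes nm: "n \<le> m"
  shows "(\<lambda>x. a x * hh u n x * hh u m x) integrable_on {-L..L} \<and> integral {-L..L} (\<lambda>x. a x * hh u n x * hh u m x) = Q u n"
proof -
  have "(\<lambda>x. a x * hh u n x * hh u m x) integrable_on {-L..L} \<and> integral {-L..L} (\<lambda>x. a x * hh u n x * hh u m x)
     = (\<Sum>j<2^n. integral {tp n j..tp n (Suc j)} (\<lambda>x. cc u n j * hh u m x))"
  proof (rule piecewise_int)
    fix j :: nat and x :: real assume j: "j < 2^n" and x: "x \<in> {tp n j..<tp n (Suc j)}"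
    show "a x * hh u n x * hh u m x = cc u n j * hh u m x"
      using hh_on[OF j x] a_p[of x] by (simp add: field_simps)
  next
    fix j :: nat assume j: "j < 2^n"
    show "(\<lambda>x. cc u n j * hh u m x) integrable_on {tp n j..tp n (Suc j)}"
      using hh_coarse[OF nm j] by (auto intro: integrable_on_mult_right)
  qed
  moreover have "(\<Sum>j<2^n. integral {tp n j..tp n (Suc j)} (\<lambda>x. cc u n j * hh u m x)) = Q u n"
    unfolding Q_def
  proof (rule sum.cong)
    fix j :: nat assume "j \<in> {..<2^n}"
    then have j: "j < 2^n" by simp
    show "integral {tp n j..tp n (Suc j)} (\<lambda>x. cc u n j * hh u m x) = (dU u n j)^2 / wt n j"
      using hh_coarse[OF nm j] by (simp add: integral_mult_right cc_def power2_eq_square)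
  qed simp
  ultimately show ?thesis by simp
qed

lemma hh_abs: "hh u n absolutely_integrable_on {-L..L}"
proof -
  have "(\<lambda>x. norm (hh u n x)) integrable_on {-L..L}"
  proof -
    have "(\<lambda>x. norm (hh u n x)) integrable_on {-L..L} \<and> integral {-L..L} (\<lambda>x. norm (hh u n x)) = (\<Sum>j<2^n. integral {tp n j..tp n (Suc j)} (\<lambda>x. \<bar>cc u n j\<bar> * (1 / a x)))"
    proof (rule piecewise_int)
      fix j :: nat and x :: real assume j: "j < 2^n" and x: "x \<in> {tp n j..<tp n (Suc j)}"
      show "norm (hh u n x) = \<bar>cc u n j\<bar> * (1 / a x)"
        using hh_on[OF j x] a_p[of x] by (simp add: abs_mult abs_divide)
    next
      fix j :: nat
      show "(\<lambda>x. \<bar>cc u n j\<bar> * (1 / a x)) integrable_on {tp n j..tp n (Suc j)}"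
        by (rule integrable_on_mult_right[OF inva_int])
    qed
    then show ?thesis by blast
  qed
  then show ?thesis using hh_intL unfolding absolutely_integrable_on_def by blast
qed

lemma diff_sq:
  assumes nm: "n \<le> m"
  shows "(\<lambda>x. a x * (hh u m x - hh u n x)^2) integrable_on {-L..L} \<and>
         integral {-L..L} (\<lambda>x. a x * (hh u m x - hh u n x)^2) = Q u m - Q u n"
proof -
  have c1: "(\<lambda>x. a x * hh u m x * hh u m x) integrable_on {-L..L}" "integral {-L..L} (\<lambda>x. a x * hh u m x * hh u m x) = Q u m"
    using cross[of m m u] by auto
  have c2: "(\<lambda>x. a x * hh u n x * hh u m x) integrable_on {-L..L}" "integral {-L..L} (\<lambda>x. a x * hh u n x * hh u m x) = Q u n"
    using cross[OF nm, of u] by auto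
  have c3: "(\<lambda>x. a x * hh u n x * hh u n x) integrable_on {-L..L}" "integral {-L..L} (\<lambda>x. a x * hh u n x * hh u n x) = Q u n"
    using cross[of n n u] by auto
  have eq: "(\<lambda>x. a x * (hh u m x - hh u n x)^2) = (\<lambda>x. (a x * hh u m x * hh u m x - 2 * (a x * hh u n x * hh u m x)) + a x * hh u n x * hh u n x)"
    by (rule ext) (simp add: power2_eq_square algebra_simps)
  have i2: "(\<lambda>x. 2 * (a x * hh u n x * hh u m x)) integrable_on {-L..L}" by (rule integrable_on_mult_right[OF c2(1)])
  have i12: "(\<lambda>x. a x * hh u m x * hh u m x - 2 * (a x * hh u n x * hh u m x)) integrable_on {-L..L}"
    by (rule integrable_diff[OF c1(1) i2])
  show ?thesis unfolding eq
    using integrable_add[OF i12 c3(1)] integral_add[OF i12 c3(1)] integral_diff[OF c1(1) i2] c1(2) c2(2) c3(2)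
    by (simp add: integral_mult_right)
qed

lemma Q_mono:
  assumes "n \<le> m" shows "Q u n \<le> Q u m"
proof -
  have "integral {-L..L} (\<lambda>x. a x * (hh u m x - hh u n x)^2) \<ge> 0"
    by (rule integral_nonneg) (use diff_sq[OF assms, of u] in \<open>auto simp: less_imp_le[OF a_p]\<close>)
  then show ?thesis using diff_sq[OF assms, of u] by simp
qed

lemma Wdef_pos: "integral {-L..L} (\<lambda>x. 1 / a x) \<ge> 0"
  by (rule integral_nonneg[OF inva_int]) (simp add: less_imp_le[OF a_p])

lemma diff_L1:
  assumes nm: "n \<le> m"
  shows "integral {-L..L} (\<lambda>x. \<bar>hh u m x - hh u n x\<bar>) \<le> sqrt (integral {-L..L} (\<lambda>x. 1 / a x)) * sqrt (Q u m - Q u n)"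
proof -
  have ad: "(\<lambda>x. hh u m x - hh u n x) absolutely_integrable_on {-L..L}"
    by (rule set_integral_diff(1)[OF hh_abs hh_abs])
  then have ai: "(\<lambda>x. \<bar>hh u m x - hh u n x\<bar>) integrable_on {-L..L}"
    unfolding absolutely_integrable_on_def by simp
  have "(integral {-L..L} (\<lambda>x. \<bar>hh u m x - hh u n x\<bar>))^2 \<le> integral {-L..L} (\<lambda>x. 1 / a x) * integral {-L..L} (\<lambda>x. a x * (\<bar>hh u m x - hh u n x\<bar>)^2)"
    by (rule CS_weighted[OF _ ai inva_int a_p]) (use diff_sq[OF nm, of u] in simp)
  also have "\<dots> = integral {-L..L} (\<lambda>x. 1 / a x) * (Q u m - Q u n)"
    using diff_sq[OF nm, of u] by simp
  finally have "sqrt ((integral {-L..L} (\<lambda>x. \<bar>hh u m x - hh u n x\<bar>))^2) \<le> sqrt (integral {-L..L} (\<lambda>x. 1 / a x) * (Q u m - Q u n))"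
    using real_sqrt_le_mono by blast
  moreover have "integral {-L..L} (\<lambda>x. \<bar>hh u m x - hh u n x\<bar>) \<ge> 0" by (rule integral_nonneg[OF ai]) simp
  ultimately show ?thesis by (simp add: real_sqrt_mult)
qed

end

context setting
begin

lemma Q_le_quad:
  assumes w: "weak_deriv_on L u g"
  shows "Q u n \<le> quad g"
proof -
  have I: "-L \<le> tp n j" "tp n j \<le> tp n (Suc j)" "tp n (Suc j) \<le> L" if "j < 2^n" for j
    using tp_in[of j n] tp_in[of "Suc j" n] that tp_mono by auto
  have sub: "(\<lambda>x. a x * (g x)^2) integrable_on {tp n j..tp n (Suc j)}" if "j < 2^n" for j
    by (rule integrable_subinterval_real[OF quad_int[OF w]]) (use I[OF that] in auto)
  have tm: "(dU u n j)^2 / wt n j \<le> integral {tp n j..tp n (Suc j)} (\<lambda>x. a x * (g x)^2)" if j: "j < 2^n" for j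
  proof -
    have "dU u n j = integral {tp n j..tp n (Suc j)} g"
      unfolding dU_def by (rule wd_diff[OF w]) (use I[OF j] in auto)
    moreover have "(integral {tp n j..tp n (Suc j)} g)^2 \<le> wt n j * integral {tp n j..tp n (Suc j)} (\<lambda>x. a x * (g x)^2)"
      unfolding wt_def by (rule CS_weighted[OF sub[OF j] wd_int_sub(1)[OF w] inva_int a_p]) (use I[OF j] in auto)
    ultimately show ?thesis using wt_pos[of n j] by (simp add: divide_le_eq mult.commute)
  qed
  have "Q u n \<le> (\<Sum>j<2^n. integral {tp n j..tp n (Suc j)} (\<lambda>x. a x * (g x)^2))"
    unfolding Q_def by (rule sum_mono) (use tm in auto)
  also have "\<dots> = quad g"
  proof -
    have "(\<lambda>x. a x * (g x)^2) integrable_on {tp n 0..tp n (2^n)} \<and> integral {tp n 0..tp n (2^n)} (\<lambda>x. a x * (g x)^2) = (\<Sum>j<2^n. integral {tp n j..tp n (Suc j)} (\<lambda>x. a x * (g x)^2))"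
      by (rule partition_integral[where t="tp n", OF tp_mono]) (use sub in auto)
    then show ?thesis by (simp add: quad_def)
  qed
  finally show ?thesis .
qed

lemma dl_lim: "dl \<longlonglongrightarrow> 0"
proof -
  have "dl = (\<lambda>n. (2*L) * (1/2)^n)" by (rule ext) (simp add: dl_def power_one_over)
  moreover have "(\<lambda>n. (2*L) * (1/2::real)^n) \<longlonglongrightarrow> (2*L) * 0"
    by (intro tendsto_mult tendsto_const LIMSEQ_power_zero) simp
  ultimately show ?thesis by simp
qed

lemma grid_approx:
  assumes x: "x \<in> {-L..L}"
  shows "\<exists>j. j \<le> 2^n \<and> tp n j \<le> x \<and> x - tp n j < dl n"
proof -
  define t where "t = (x + L) / dl n"
  have t0: "t \<ge> 0" using x dl_pos[of n] by (simp add: t_def)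
  have tN: "t \<le> 2^n" using x dl_pos[of n] L_p by (simp add: t_def dl_def field_simps)
  have tdl: "t * dl n = x + L" using dl_pos[of n] by (simp add: t_def)
  define j where "j = nat \<lfloor>t\<rfloor>"
  have jr: "real j = of_int \<lfloor>t\<rfloor>" using t0 by (simp add: j_def)
  have j1: "real j \<le> t" "t < real j + 1" using jr by linarith+
  have "j \<le> 2^n"
  proof -
    have "real j \<le> 2^n" using j1 tN by linarith
    then show ?thesis by (metis of_nat_le_iff of_nat_numeral of_nat_power)
  qed
  moreover have "tp n j \<le> x"
  proof -
    have "real j * dl n \<le> t * dl n" using j1 dl_pos[of n] by (simp add: mult_right_mono)
    then show ?thesis using tdl by (simp add: tp_def)
  qed
  moreover have "x - tp n j < dl n"
  proof -
    have "t * dl n < (real j + 1) * dl n" using j1 dl_pos[of n] by (simp add: mult_strict_right_mono)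
    then show ?thesis using tdl by (simp add: tp_def algebra_simps)
  qed
  ultimately show ?thesis by blast
qed

lemma F4:
  assumes uc: "continuous_on {-L..L} u" and QC: "\<And>n. Q u n \<le> C"
  shows "\<exists>g. weak_deriv_on L u g \<and> quad g \<le> C"
proof -
  have inc: "incseq (Q u)" by (rule incseq_SucI) (rule Q_mono, simp)
  obtain Ql where Ql: "Q u \<longlonglongrightarrow> Ql" "\<forall>i. Q u i \<le> Ql"
    using incseq_convergent[OF inc] QC by blast
  have "\<forall>k. \<exists>N. \<forall>n\<ge>N. Ql - Q u n \<le> (1/4)^k"
  proof
    fix k :: nat
    have "(1/4::real)^k > 0" by simp
    then obtain N where "\<forall>n\<ge>N. dist (Q u n) Ql < (1/4)^k"
      using Ql(1) unfolding lim_sequentially by blast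
    then have "\<forall>n\<ge>N. Ql - Q u n \<le> (1/4)^k" by (auto simp: dist_real_def)
    then show "\<exists>N. \<forall>n\<ge>N. Ql - Q u n \<le> (1/4)^k" by blast
  qed
  then obtain N where N: "\<And>k n. n \<ge> N k \<Longrightarrow> Ql - Q u n \<le> (1/4)^k" by metis
  define r where "r k = k + (\<Sum>i\<le>k. N i)" for k
  have rsuc: "r k < r (Suc k)" for k by (simp add: r_def)
  have rN: "N k \<le> r k" for k
  proof -
    have "N k \<le> (\<Sum>i\<le>k. N i)" by (rule member_le_sum) auto
    then show ?thesis by (simp add: r_def)
  qed
  have rk: "k \<le> r k" for k by (simp add: r_def)
  define h where "h k = hh u (r k)" for k
  define W where "W = integral {-L..L} (\<lambda>x. 1 / a x)"
  have hi: "h k absolutely_integrable_on {-L..L}" for k unfolding h_def by (rule hh_abs)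
  have sqeq: "(\<lambda>x. a x * (h k x)^2) = (\<lambda>x. a x * hh u (r k) x * hh u (r k) x)" for k
    by (rule ext) (simp add: h_def power2_eq_square)
  have hai: "(\<lambda>x. a x * (h k x)^2) integrable_on {-L..L}" for k
    unfolding sqeq using cross[of "r k" "r k" u] by simp
  have hC: "integral {-L..L} (\<lambda>x. a x * (h k x)^2) \<le> C" for k
    unfolding sqeq using cross[of "r k" "r k" u] QC[of "r k"] by simp
  have fast: "integral {-L..L} (\<lambda>x. \<bar>h (Suc k) x - h k x\<bar>) \<le> sqrt W * (1/2)^k" for k
  proof -
    have le: "r k \<le> r (Suc k)" using rsuc[of k] by simp
    have "integral {-L..L} (\<lambda>x. \<bar>h (Suc k) x - h k x\<bar>) \<le> sqrt W * sqrt (Q u (r (Suc k)) - Q u (r k))"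
      unfolding h_def W_def by (rule diff_L1[OF le])
    also have "\<dots> \<le> sqrt W * sqrt ((1/4)^k)"
    proof (rule mult_left_mono)
      have "Q u (r (Suc k)) \<le> Ql" using Ql(2) by blast
      moreover have "Ql - Q u (r k) \<le> (1/4)^k" by (rule N[OF rN])
      ultimately show "sqrt (Q u (r (Suc k)) - Q u (r k)) \<le> sqrt ((1/4)^k)" by simp
    qed (use Wdef_pos in \<open>simp add: W_def\<close>)
    also have "sqrt ((1/4::real)^k) = (1/2)^k"
    proof -
      have "(1/4::real)^k = ((1/2)^k)^2" by (simp add: power_mult_distrib[symmetric] power2_eq_square power_mult[symmetric] power_one_over)
      then show ?thesis by simp
    qed
    finally show ?thesis .
  qed
  obtain g where gabs: "g absolutely_integrable_on {-L..L}" and g2: "(\<lambda>x. (g x)^2) integrable_on {-L..L}"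
    and qg: "quad g \<le> C" and conv: "\<And>y. y \<in> {-L..L} \<Longrightarrow> (\<lambda>k. integral {-L..y} (h k)) \<longlonglongrightarrow> integral {-L..y} g"
    using L2_limit[OF hi hai hC fast] by blast
  have gi: "g integrable_on {-L..L}" using gabs by (simp add: absolutely_integrable_on_def)
  have grid: "integral {-L..tp n j} g = u (tp n j) - u (-L)" if j: "j \<le> 2^n" for n j
  proof -
    have ev: "\<forall>\<^sub>F k in sequentially. integral {-L..tp n j} (h k) = u (tp n j) - u (-L)"
    proof (rule eventually_sequentiallyI[of n])
      fix k assume "n \<le> k"
      then have nk: "n \<le> r k" using rk[of k] by simp
      define d where "d = r k - n"
      have rkd: "r k = n + d" using nk by (simp add: d_def)
      have jd: "j * 2^d \<le> 2^(r k)" using j unfolding rkd power_add by (simp add: mult_le_mono1)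
      have "tp n j = tp (r k) (j * 2^d)" unfolding rkd by (rule tp_refine)
      then show "integral {-L..tp n j} (h k) = u (tp n j) - u (-L)"
        using hh_grid[OF jd, of u] by (simp add: h_def)
    qed
    have "(\<lambda>k. integral {-L..tp n j} (h k)) \<longlonglongrightarrow> u (tp n j) - u (-L)"
      by (rule tendsto_eventually[OF ev])
    moreover have "(\<lambda>k. integral {-L..tp n j} (h k)) \<longlonglongrightarrow> integral {-L..tp n j} g"
      by (rule conv) (rule tp_in[OF j])
    ultimately show ?thesis using LIMSEQ_unique by blast
  qed
  have Gc: "continuous_on {-L..L} (\<lambda>y. integral {-L..y} g)"
    by (rule indefinite_integral_continuous_1[OF gi])
  have all: "u x = u (-L) + integral {-L..x} g" if x: "x \<in> {-L..L}" for x
  proof -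
    have "\<forall>n. \<exists>j. j \<le> 2^n \<and> tp n j \<le> x \<and> x - tp n j < dl n" using grid_approx[OF x] by blast
    then obtain J where J: "\<And>n. J n \<le> 2^n" "\<And>n. tp n (J n) \<le> x" "\<And>n. x - tp n (J n) < dl n" by metis
    define y where "y n = tp n (J n)" for n
    have yin: "y n \<in> {-L..L}" for n unfolding y_def by (rule tp_in[OF J(1)])
    have ylim: "y \<longlonglongrightarrow> x"
    proof (rule tendsto_sandwich[of "\<lambda>n. x - dl n" _ _ "\<lambda>n. x"])
      have "x - dl n \<le> y n" for n using J(3)[of n] by (simp add: y_def)
      then show "\<forall>\<^sub>F n in sequentially. x - dl n \<le> y n" by (auto intro!: always_eventually)
      show "\<forall>\<^sub>F n in sequentially. y n \<le> x" using J(2) by (auto simp: y_def intro!: always_eventually)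
      show "(\<lambda>n. x - dl n) \<longlonglongrightarrow> x" using tendsto_diff[OF tendsto_const dl_lim, of x] by simp
    qed simp
    have l1: "(\<lambda>n. u (y n)) \<longlonglongrightarrow> u x"
      by (rule continuous_on_tendsto_compose[OF uc ylim x]) (use yin in \<open>auto intro: always_eventually\<close>)
    have l2: "(\<lambda>n. integral {-L..y n} g) \<longlonglongrightarrow> integral {-L..x} g"
      by (rule continuous_on_tendsto_compose[OF Gc ylim x]) (use yin in \<open>auto intro: always_eventually\<close>)
    have "(\<lambda>n. integral {-L..y n} g) = (\<lambda>n. u (y n) - u (-L))"
      by (rule ext) (simp add: y_def grid[OF J(1)])
    with l2 have "(\<lambda>n. u (y n) - u (-L)) \<longlonglongrightarrow> integral {-L..x} g" by simp
    moreover have "(\<lambda>n. u (y n) - u (-L)) \<longlonglongrightarrow> u x - u (-L)" by (intro tendsto_diff l1 tendsto_const)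
    ultimately have "integral {-L..x} g = u x - u (-L)" using LIMSEQ_unique by blast
    then show ?thesis by simp
  qed
  have "weak_deriv_on L u g" unfolding weak_deriv_on_def using gabs g2 all by blast
  with qg show ?thesis by blast
qed

end

context setting
begin

lemma wt_ne: "wt n j \<noteq> 0" using wt_pos[of n j] by simp

lemma pot_conv:
  assumes wk: "\<And>k. continuous_on {-L..L} (w k)" and w: "continuous_on {-L..L} wl"
    and lim: "\<And>x. x \<in> {-L..L} \<Longrightarrow> (\<lambda>k. w k x) \<longlonglongrightarrow> wl x"
    and R: "\<And>k x. x \<in> {-L..L} \<Longrightarrow> \<bar>w k x\<bar> \<le> R"
  shows "(\<lambda>k. pot (w k)) \<longlonglongrightarrow> pot wl"
proof -
  obtain Gm where Gm: "\<forall>s\<in>{-R..R}. \<bar>G s\<bar> \<le> Gm" using cont_max[OF G_ci] by blast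
  obtain bm where bm: "\<forall>x\<in>{-L..L}. \<bar>b x\<bar> \<le> bm" using cont_max[OF b_ci] by blast
  have i1: "(\<lambda>x. G (w k x) * b x) integrable_on {-L..L}" for k by (rule pot_int[OF wk])
  have i2: "(\<lambda>x. Gm * bm) integrable_on {-L..L}" by (simp add: integrable_on_const)
  have le: "norm (G (w k x) * b x) \<le> Gm * bm" if x: "x \<in> {-L..L}" for k x
  proof -
    have "w k x \<in> {-R..R}" using R[OF x, of k] by (simp add: abs_le_iff)
    then have "\<bar>G (w k x)\<bar> \<le> Gm" using Gm by blast
    moreover have "\<bar>b x\<bar> \<le> bm" using bm x by auto
    ultimately show ?thesis by (simp add: abs_mult mult_mono')
  qed
  have cv: "(\<lambda>k. G (w k x) * b x) \<longlonglongrightarrow> G (wl x) * b x" if x: "x \<in> {-L..L}" for x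
  proof (rule tendsto_mult_right)
    show "(\<lambda>k. G (w k x)) \<longlonglongrightarrow> G (wl x)"
      by (rule continuous_on_tendsto_compose[OF G_c lim[OF x]]) auto
  qed
  have "(\<lambda>k. integral {-L..L} (\<lambda>x. G (w k x) * b x)) \<longlonglongrightarrow> integral {-L..L} (\<lambda>x. G (wl x) * b x)"
    by (rule dominated_convergence(2)[of "\<lambda>k x. G (w k x) * b x", OF i1 i2 le cv])
  then show ?thesis unfolding pot_def by blast
qed

lemma H1m_wd: "u \<in> H1_m L m \<Longrightarrow> weak_deriv_on L u (wderiv L u)"
proof -
  assume "u \<in> H1_m L m"
  then have "H1 L u" unfolding H1_m_def by blast
  then show ?thesis by (rule wderiv_wd)
qed

lemma energy_nn: "u \<in> H1_m L m \<Longrightarrow> energy a b G L u \<ge> 0"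
proof -
  assume u: "u \<in> H1_m L m"
  have e: "energy a b G L u = (1/2) * quad (wderiv L u) + pot u" by (rule energy_split[OF H1m_wd[OF u]])
  have "quad (wderiv L u) \<ge> 0" by (rule quad_nn[OF H1m_wd[OF u]])
  moreover have "pot u \<ge> 0" by (rule pot_nn[OF wd_cont[OF H1m_wd[OF u]]])
  ultimately show ?thesis using e by simp
qed

lemma compactness:
  assumes uk: "\<And>k. u k \<in> H1_m L (mk k)" and mk: "mk \<longlonglongrightarrow> ms"
    and Ek: "\<And>k. energy a b G L (u k) \<le> c k" and ck: "c \<longlonglongrightarrow> l"
  shows "\<exists>v r. strict_mono r \<and> v \<in> H1_m L ms \<and> energy a b G L v \<le> l \<and> (\<forall>x\<in>{-L..L}. (\<lambda>k. u (r k) x) \<longlonglongrightarrow> v x)"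
proof -
  define g where "g k = wderiv L (u k)" for k
  have w: "weak_deriv_on L (u k) (g k)" for k unfolding g_def by (rule H1m_wd[OF uk])
  have ucont: "continuous_on {-L..L} (u k)" for k by (rule wd_cont[OF w])
  have esp: "energy a b G L (u k) = (1/2) * quad (g k) + pot (u k)" for k by (rule energy_split[OF w])
  obtain B0 where B0: "\<forall>x\<in>range c. norm x \<le> B0"
    using convergent_imp_bounded[OF ck] unfolding bounded_iff by blast
  have B: "\<And>k. c k \<le> B0" using B0 by (metis abs_le_D1 rangeI real_norm_def)
  define B where "B = B0" 
  obtain c0 where c0: "c0 > 0" "\<forall>x\<in>{-L..L}. a x \<ge> c0" using amin by blast
  define B2 where "B2 = 2 * B / c0"
  have sqb: "integral {-L..L} (\<lambda>x. (g k x)^2) \<le> B2" for k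
  proof -
    have "integral {-L..L} (\<lambda>x. c0 * (g k x)^2) \<le> quad (g k)"
      unfolding quad_def
      by (rule integral_le) (use c0 wd_int(2)[OF w] quad_int[OF w] in \<open>auto intro: mult_right_mono integrable_on_mult_right\<close>)
    moreover have "quad (g k) \<le> 2 * B"
      using esp[of k] Ek[of k] B[of k] B_def pot_nn[OF ucont, of k] by linarith
    ultimately have "c0 * integral {-L..L} (\<lambda>x. (g k x)^2) \<le> 2 * B" by simp
    then show ?thesis using c0 by (simp add: B2_def field_simps)
  qed
  have B20: "B2 \<ge> 0" using sqb[of 0] wd_sq_nonneg[OF w, of 0] by linarith
  have hol: "\<bar>u k x - u k y\<bar> \<le> sqrt B2 * sqrt \<bar>x - y\<bar>" if "x \<in> {-L..L}" "y \<in> {-L..L}" for k x y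
  proof -
    have "\<bar>u k x - u k y\<bar> \<le> sqrt (integral {-L..L} (\<lambda>x. (g k x)^2)) * sqrt \<bar>x - y\<bar>"
      by (rule wd_holder_abs[OF w that])
    also have "\<dots> \<le> sqrt B2 * sqrt \<bar>x - y\<bar>" by (intro mult_right_mono real_sqrt_le_mono sqb) simp
    finally show ?thesis .
  qed
  obtain Mb where Mb0: "\<forall>x\<in>range mk. norm x \<le> Mb"
    using convergent_imp_bounded[OF mk] unfolding bounded_iff by blast
  have Mb: "\<And>k. \<bar>mk k\<bar> \<le> Mb" using Mb0 by (metis rangeI real_norm_def)
  define R where "R = Mb + sqrt B2 * sqrt (2 * L)"
  have ubd: "\<bar>u k x\<bar> \<le> R" if x: "x \<in> {-L..L}" for k x
  proof -
    have uL: "u k (-L) = - mk k" using uk[of k] unfolding H1_m_def by simp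
    have "\<bar>u k x - u k (-L)\<bar> \<le> sqrt B2 * sqrt \<bar>x - (-L)\<bar>" by (rule hol) (use x L_p in auto)
    also have "\<dots> \<le> sqrt B2 * sqrt (2 * L)" using x B20 by (intro mult_left_mono real_sqrt_le_mono) auto
    finally show ?thesis using uL Mb[of k] by (simp add: R_def)
  qed
  obtain v0 r where v0c: "continuous_on {-L..L} v0" and r: "strict_mono (r :: nat \<Rightarrow> nat)"
    and unif: "\<And>e. 0 < e \<Longrightarrow> \<exists>N. \<forall>n x. n \<ge> N \<and> x \<in> {-L..L} \<longrightarrow> norm (u (r n) x - v0 x) < e"
  proof (rule Arzela_Ascoli[of "{-L..L}" u R])
    show "compact {-L..L::real}" by simp
    show "norm (u n x) \<le> R" if "x \<in> {-L..L}" for n x using ubd[OF that] by simp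
    fix x e :: real assume x: "x \<in> {-L..L}" and e: "0 < e"
    define d where "d = (e / (sqrt B2 + 1))^2"
    have sp: "sqrt B2 + 1 > 0" using B20 by (simp add: add_nonneg_pos)
    have d: "d > 0" using e sp by (simp add: d_def)
    show "\<exists>d>0. \<forall>n y. y \<in> {-L..L} \<and> norm (x - y) < d \<longrightarrow> norm (u n x - u n y) < e"
    proof (intro exI[of _ d] conjI allI impI d)
      fix n y assume y: "y \<in> {-L..L} \<and> norm (x - y) < d"
      have "sqrt \<bar>x - y\<bar> < sqrt d" using y by simp
      also have "sqrt d = e / (sqrt B2 + 1)" using e sp by (simp add: d_def)
      finally have sl: "sqrt \<bar>x - y\<bar> < e / (sqrt B2 + 1)" .
      have "\<bar>u n x - u n y\<bar> \<le> sqrt B2 * sqrt \<bar>x - y\<bar>" by (rule hol) (use x y in auto)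
      also have "\<dots> \<le> sqrt B2 * (e / (sqrt B2 + 1))" by (intro mult_left_mono less_imp_le[OF sl]) (use B20 in simp)
      also have "\<dots> < e"
      proof -
        have "sqrt B2 * e < (sqrt B2 + 1) * e" using e by simp
        then have "sqrt B2 * e / (sqrt B2 + 1) < e" using sp by (simp add: divide_less_eq mult.commute)
        then show ?thesis by simp
      qed
      finally show "norm (u n x - u n y) < e" by simp
    qed
  qed blast
  have pw: "(\<lambda>k. u (r k) x) \<longlonglongrightarrow> v0 x" if x: "x \<in> {-L..L}" for x
  proof (rule LIMSEQ_I)
    fix e :: real assume "e > 0"
    then obtain N where "\<forall>n x. n \<ge> N \<and> x \<in> {-L..L} \<longrightarrow> norm (u (r n) x - v0 x) < e" using unif by blast
    then show "\<exists>N. \<forall>n\<ge>N. norm (u (r n) x - v0 x) < e" using x by blast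
  qed
  have potc: "(\<lambda>k. pot (u (r k))) \<longlonglongrightarrow> pot v0"
    by (rule pot_conv[OF ucont v0c pw ubd])
  have Qv: "Q v0 n \<le> 2 * (l - pot v0)" for n
  proof -
    have QL: "(\<lambda>k. Q (u (r k)) n) \<longlonglongrightarrow> Q v0 n"
      unfolding Q_def dU_def
      by (intro tendsto_intros pw tp_in) (auto simp: wt_ne)
    have QR: "(\<lambda>k. 2 * (c (r k) - pot (u (r k)))) \<longlonglongrightarrow> 2 * (l - pot v0)"
    proof -
      have crl: "(\<lambda>k. c (r k)) \<longlonglongrightarrow> l" using LIMSEQ_subseq_LIMSEQ[OF ck r] by (simp add: o_def)
      show ?thesis by (intro tendsto_intros potc crl)
    qed
    have "Q (u (r k)) n \<le> 2 * (c (r k) - pot (u (r k)))" for k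
    proof -
      have q1: "Q (u (r k)) n \<le> quad (g (r k))" by (rule Q_le_quad[OF w])
      have q2: "(1/2) * quad (g (r k)) + pot (u (r k)) \<le> c (r k)" using esp[of "r k"] Ek[of "r k"] by simp
      have q3: "quad (g (r k)) \<le> 2 * (c (r k) - pot (u (r k)))"
      proof -
        define A where "A = quad (g (r k))"
        define P where "P = pot (u (r k))"
        define CC where "CC = c (r k)"
        have "1/2 * A + P \<le> CC" using q2 unfolding A_def P_def CC_def .
        then have "A \<le> 2 * (CC - P)" by (simp add: algebra_simps)
        then show ?thesis unfolding A_def P_def CC_def .
      qed
      show ?thesis by (rule order_trans[OF q1 q3])
    qed
    then show ?thesis using LIMSEQ_le[OF QL QR] by blast
  qed
  obtain gv where gv: "weak_deriv_on L v0 gv" "quad gv \<le> 2 * (l - pot v0)"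
    using F4[OF v0c Qv] by blast
  have vH: "v0 \<in> H1_m L ms"
  proof -
    have e1: "(\<lambda>k. u (r k) (-L)) \<longlonglongrightarrow> v0 (-L)" by (rule pw) (use L_p in simp)
    have e2: "(\<lambda>k. u (r k) L) \<longlonglongrightarrow> v0 L" by (rule pw) (use L_p in simp)
    have "(\<lambda>k. u (r k) (-L)) = (\<lambda>k. - mk (r k))" "(\<lambda>k. u (r k) L) = (\<lambda>k. mk (r k))"
      using uk unfolding H1_m_def by auto
    moreover have "(\<lambda>k. - mk (r k)) \<longlonglongrightarrow> - ms" "(\<lambda>k. mk (r k)) \<longlonglongrightarrow> ms"
      using LIMSEQ_subseq_LIMSEQ[OF mk r] by (auto intro: tendsto_minus simp: o_def)
    ultimately have "v0 (-L) = - ms" "v0 L = ms" using e1 e2 LIMSEQ_unique by metis+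
    then show ?thesis using gv(1) unfolding H1_m_def H1_def by blast
  qed
  have "energy a b G L v0 \<le> l" using energy_split[OF gv(1)] gv(2) by simp
  then show ?thesis using r vH pw by blast
qed

end

context setting
begin

lemma lin_wd: "weak_deriv_on L (\<lambda>x. v0 + d * x / L) (\<lambda>x. d / L)"
proof -
  have c: "continuous_on {-L..L} (\<lambda>x::real. d / L)" by simp
  have "(\<lambda>x. d / L) absolutely_integrable_on {-L..L}" by (rule absolutely_integrable_continuous_real[OF c])
  moreover have "(\<lambda>x. (d / L)^2) integrable_on {-L..L}" by (simp add: integrable_on_const)
  moreover have "\<forall>x\<in>{-L..L}. v0 + d * x / L = (v0 + d * (-L) / L) + integral {-L..x} (\<lambda>x. d / L)"
    using L_p by (auto simp: field_simps)
  ultimately show ?thesis unfolding weak_deriv_on_def by blast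
qed

lemma shift_wd:
  assumes w: "weak_deriv_on L v g"
  shows "weak_deriv_on L (\<lambda>x. v x + d * x / L) (\<lambda>x. g x + d / L)"
proof -
  have c: "continuous_on {-L..L} (\<lambda>x::real. d / L)" by simp
  have ca: "(\<lambda>x. d / L) absolutely_integrable_on {-L..L}" by (rule absolutely_integrable_continuous_real[OF c])
  have a1: "(\<lambda>x. g x + d / L) absolutely_integrable_on {-L..L}"
    by (rule set_integral_add(1)[OF wd_int(3)[OF w] ca])
  have i1: "(\<lambda>x. 2 * (d / L) * g x) integrable_on {-L..L}" by (rule integrable_on_mult_right[OF wd_int(1)[OF w]])
  have i2: "(\<lambda>x. (g x)^2 + 2 * (d / L) * g x) integrable_on {-L..L}" by (rule integrable_add[OF wd_int(2)[OF w] i1])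
  have "(\<lambda>x. (g x)^2 + 2 * (d / L) * g x + (d/L)^2) integrable_on {-L..L}"
    by (rule integrable_add[OF i2]) (simp add: integrable_on_const)
  moreover have "(\<lambda>x. (g x + d / L)^2) = (\<lambda>x. (g x)^2 + 2 * (d / L) * g x + (d/L)^2)"
    by (rule ext) (simp add: power2_eq_square algebra_simps)
  ultimately have a2: "(\<lambda>x. (g x + d / L)^2) integrable_on {-L..L}" by simp
  have a3: "\<forall>x\<in>{-L..L}. v x + d * x / L = (v (-L) + d * (-L) / L) + integral {-L..x} (\<lambda>x. g x + d / L)"
  proof
    fix x assume x: "x \<in> {-L..L}"
    have gi: "g integrable_on {-L..x}" using wd_int_sub(1)[OF w, of "-L" x] x by simp
    have "integral {-L..x} (\<lambda>x. g x + d / L) = integral {-L..x} g + integral {-L..x} (\<lambda>x. d / L)"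
      by (rule integral_add[OF gi]) (simp add: integrable_on_const)
    also have "integral {-L..x} g = v x - v (-L)" using wd_diff[OF w, of "-L" x] x by simp
    also have "integral {-L..x} (\<lambda>x. d / L) = (x + L) * (d / L)" using x by simp
    finally show "v x + d * x / L = (v (-L) + d * (-L) / L) + integral {-L..x} (\<lambda>x. g x + d / L)"
      using L_p by (simp add: field_simps)
  qed
  show ?thesis unfolding weak_deriv_on_def using a1 a2 a3 by blast
qed

lemma shift_H1m:
  assumes v: "v \<in> H1_m L m0"
  shows "(\<lambda>x. v x + d * x / L) \<in> H1_m L (m0 + d)"
proof -
  have w: "weak_deriv_on L v (wderiv L v)" by (rule H1m_wd[OF v])
  have "H1 L (\<lambda>x. v x + d * x / L)" unfolding H1_def using shift_wd[OF w] by blast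
  moreover have "v (-L) = - m0" "v L = m0" using v unfolding H1_m_def by auto
  ultimately show ?thesis unfolding H1_m_def using L_p by simp
qed

lemma exists_min: "\<exists>u. is_minimizer a b G L m u"
proof -
  define S where "S = energy a b G L ` H1_m L m"
  have lin: "(\<lambda>x. 0 + m * x / L) \<in> H1_m L m"
    unfolding H1_m_def H1_def using lin_wd[of 0 m] L_p by auto
  have Sne: "S \<noteq> {}" using lin unfolding S_def by blast
  have Sbd: "bdd_below S" unfolding S_def bdd_below_def using energy_nn by blast
  define E0 where "E0 = Inf S"
  have "\<forall>k::nat. \<exists>u. u \<in> H1_m L m \<and> energy a b G L u < E0 + 1 / (real k + 1)"
  proof
    fix k :: nat
    have "Inf S < E0 + 1 / (real k + 1)" unfolding E0_def by simp
    then obtain s where "s \<in> S" "s < E0 + 1 / (real k + 1)" using cInf_lessD[OF Sne] by blast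
    then show "\<exists>u. u \<in> H1_m L m \<and> energy a b G L u < E0 + 1 / (real k + 1)" unfolding S_def by blast
  qed
  then obtain u where u: "\<And>k. u k \<in> H1_m L m" "\<And>k. energy a b G L (u k) < E0 + 1 / (real k + 1)" by metis
  have cl: "(\<lambda>k. E0 + 1 / (real k + 1)) \<longlonglongrightarrow> E0"
    using tendsto_add[OF tendsto_const LIMSEQ_inverse_real_of_nat, of E0] by (simp add: inverse_eq_divide add.commute)
  obtain v r where v: "v \<in> H1_m L m" "energy a b G L v \<le> E0"
    using compactness[of u "\<lambda>_. m" m "\<lambda>k. E0 + 1 / (real k + 1)" E0, OF u(1) tendsto_const _ cl] u(2) less_imp_le by blast
  have "\<forall>w\<in>H1_m L m. energy a b G L v \<le> energy a b G L w"
  proof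
    fix w assume "w \<in> H1_m L m"
    then have "E0 \<le> energy a b G L w" unfolding E0_def S_def by (intro cInf_lower) (use Sbd S_def in auto)
    then show "energy a b G L v \<le> energy a b G L w" using v by linarith
  qed
  then show ?thesis unfolding is_minimizer_def using v by blast
qed

lemma energy_shift_lim:
  assumes v: "v \<in> H1_m L m0" and dk: "dk \<longlonglongrightarrow> 0"
  shows "(\<lambda>k. energy a b G L (\<lambda>x. v x + dk k * x / L)) \<longlonglongrightarrow> energy a b G L v"
proof -
  define g where "g = wderiv L v"
  have w: "weak_deriv_on L v g" unfolding g_def by (rule H1m_wd[OF v])
  have vc: "continuous_on {-L..L} v" by (rule wd_cont[OF w])
  define A where "A = integral {-L..L} (\<lambda>x. a x * g x)"
  define D where "D = integral {-L..L} a"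
  have agi: "(\<lambda>x. a x * g x) integrable_on {-L..L}"
    using cont_mult_absint[OF a_ci wd_int(3)[OF w]] by (simp add: absolutely_integrable_on_def)
  have ai: "a integrable_on {-L..L}" by (rule integrable_continuous_real[OF a_ci])
  have qe: "quad (\<lambda>x. g x + e) = quad g + 2 * e * A + e^2 * D" for e
  proof -
    have eq: "(\<lambda>x. a x * (g x + e)^2) = (\<lambda>x. (a x * (g x)^2 + (2 * e) * (a x * g x)) + e^2 * a x)"
      by (rule ext) (simp add: power2_eq_square algebra_simps)
    have i1: "(\<lambda>x. (2 * e) * (a x * g x)) integrable_on {-L..L}" by (rule integrable_on_mult_right[OF agi])
    have i2: "(\<lambda>x. e^2 * a x) integrable_on {-L..L}" by (rule integrable_on_mult_right[OF ai])
    have i3: "(\<lambda>x. a x * (g x)^2 + (2 * e) * (a x * g x)) integrable_on {-L..L}" by (rule integrable_add[OF quad_int[OF w] i1])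
    show ?thesis unfolding quad_def eq
      using integral_add[OF i3 i2] integral_add[OF quad_int[OF w] i1]
      by (simp add: integral_mult_right A_def D_def)
  qed
  have en: "energy a b G L (\<lambda>x. v x + dk k * x / L) = (1/2) * (quad g + 2 * (dk k / L) * A + (dk k / L)^2 * D) + pot (\<lambda>x. v x + dk k * x / L)" for k
    using energy_split[OF shift_wd[OF w, of "dk k"]] qe by simp
  obtain Vm where Vm: "\<forall>x\<in>{-L..L}. \<bar>v x\<bar> \<le> Vm" using cont_max[OF vc] by blast
  obtain Db where Db0: "\<forall>x\<in>range dk. norm x \<le> Db" using convergent_imp_bounded[OF dk] unfolding bounded_iff by blast
  have Db: "\<bar>dk k\<bar> \<le> Db" for k using Db0 by (metis rangeI real_norm_def)
  have potl: "(\<lambda>k. pot (\<lambda>x. v x + dk k * x / L)) \<longlonglongrightarrow> pot v"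
  proof (rule pot_conv[where R="Vm + Db"])
    show "continuous_on {-L..L} (\<lambda>x. v x + dk k * x / L)" for k by (intro continuous_intros vc) (use L_p in auto)
    show "continuous_on {-L..L} v" by (rule vc)
    fix x assume x: "x \<in> {-L..L}"
    show "(\<lambda>k. v x + dk k * x / L) \<longlonglongrightarrow> v x"
    proof -
      have "(\<lambda>k. v x + dk k * x / L) \<longlonglongrightarrow> v x + 0 * x / L" by (intro tendsto_intros dk) (use L_p in simp)
      then show ?thesis by simp
    qed
    fix k
    have "\<bar>dk k * x / L\<bar> \<le> Db"
    proof -
      have "\<bar>x\<bar> / L \<le> 1" using x L_p by auto
      then have "\<bar>dk k\<bar> * (\<bar>x\<bar> / L) \<le> \<bar>dk k\<bar> * 1" by (intro mult_left_mono) auto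
      then show ?thesis using Db[of k] L_p by (simp add: abs_mult abs_divide)
    qed
    then show "\<bar>v x + dk k * x / L\<bar> \<le> Vm + Db" using Vm x by (smt (verit))
  qed
  have "(\<lambda>k. (1/2) * (quad g + 2 * (dk k / L) * A + (dk k / L)^2 * D) + pot (\<lambda>x. v x + dk k * x / L))
        \<longlonglongrightarrow> (1/2) * (quad g + 2 * (0 / L) * A + (0 / L)^2 * D) + pot v"
    by (intro tendsto_intros dk potl) (use L_p in auto)
  then show ?thesis unfolding en using energy_split[OF w] by simp
qed

end

theorem main_thm:
  fixes a b G :: "real \<Rightarrow> real" and M L m0 :: real
  assumes a_cont: "continuous_on UNIV a" and a_even: "even_fun a" and a_pos: "\<forall>x. a x > 0"
    and b_cont: "continuous_on UNIV b" and b_even: "even_fun b" and b_pos: "\<forall>x. b x > 0"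
    and G_reg: "C11_loc G" and G_even: "even_fun G"
    and M_pos: "M > 0" and GM: "G M = 0" and G_ge: "\<forall>s. G s \<ge> G M"
    and G_pos: "\<forall>s\<in>{0..<M}. G s > 0"
    and L_pos: "L > 0"
    and m0_nonneg: "m0 \<ge> 0"
    and nonodd: "\<forall>u. is_minimizer a b G L m0 u \<longrightarrow> \<not> odd_on L u"
  shows "\<exists>\<epsilon>>0. \<forall>m. m0 - \<epsilon> < m \<and> m < m0 + \<epsilon> \<and> m \<ge> 0 \<longrightarrow>
            (\<exists>u. is_minimizer a b G L m u \<and> \<not> odd_on L u)"
proof (rule ccontr)
  assume neg: "\<not> ?thesis"
  have Gc: "continuous_on UNIV G"
    using G_reg unfolding C11_loc_def
    by (intro continuous_at_imp_continuous_on) (auto intro: differentiable_imp_continuous_within)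
  interpret setting a b G L
    by unfold_locales (use a_cont a_pos b_cont b_pos Gc G_ge GM L_pos in auto)
  have "\<forall>k::nat. \<exists>m. m0 - 1 / (real k + 1) < m \<and> m < m0 + 1 / (real k + 1) \<and> m \<ge> 0 \<and>
      (\<forall>u. is_minimizer a b G L m u \<longrightarrow> odd_on L u)"
  proof
    fix k :: nat
    have "1 / (real k + 1) > 0" by simp
    then show "\<exists>m. m0 - 1 / (real k + 1) < m \<and> m < m0 + 1 / (real k + 1) \<and> m \<ge> 0 \<and>
      (\<forall>u. is_minimizer a b G L m u \<longrightarrow> odd_on L u)" using neg by blast
  qed
  then obtain mk where mk: "\<And>k. m0 - 1 / (real k + 1) < mk k" "\<And>k. mk k < m0 + 1 / (real k + 1)"
    "\<And>k u. is_minimizer a b G L (mk k) u \<Longrightarrow> odd_on L u" by metis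
  have il: "(\<lambda>k. 1 / (real k + 1)) \<longlonglongrightarrow> 0"
    using LIMSEQ_inverse_real_of_nat by (simp add: inverse_eq_divide add.commute)
  have mkl: "mk \<longlonglongrightarrow> m0"
  proof (rule tendsto_sandwich[of "\<lambda>k. m0 - 1 / (real k + 1)" _ _ "\<lambda>k. m0 + 1 / (real k + 1)"])
    show "\<forall>\<^sub>F n in sequentially. m0 - 1 / (real n + 1) \<le> mk n" using mk(1) by (auto intro: always_eventually less_imp_le)
    show "\<forall>\<^sub>F n in sequentially. mk n \<le> m0 + 1 / (real n + 1)" using mk(2) by (auto intro: always_eventually less_imp_le)
    show "(\<lambda>k. m0 - 1 / (real k + 1)) \<longlonglongrightarrow> m0" using tendsto_diff[OF tendsto_const il, of m0] by simp
    show "(\<lambda>k. m0 + 1 / (real k + 1)) \<longlonglongrightarrow> m0" using tendsto_add[OF tendsto_const il, of m0] by simp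
  qed
  obtain v where v: "is_minimizer a b G L m0 v" using exists_min by blast
  have vH: "v \<in> H1_m L m0" using v unfolding is_minimizer_def by blast
  have "\<forall>k. \<exists>u. is_minimizer a b G L (mk k) u" using exists_min by blast
  then obtain u where u: "\<And>k. is_minimizer a b G L (mk k) (u k)" by metis
  have uH: "u k \<in> H1_m L (mk k)" for k using u[of k] unfolding is_minimizer_def by blast
  have uodd: "odd_on L (u k)" for k by (rule mk(3)[OF u])
  define c where "c k = energy a b G L (\<lambda>x. v x + (mk k - m0) * x / L)" for k
  have dk: "(\<lambda>k. mk k - m0) \<longlonglongrightarrow> 0" using tendsto_diff[OF mkl tendsto_const, of m0] by simp
  have cl: "c \<longlonglongrightarrow> energy a b G L v" unfolding c_def by (rule energy_shift_lim[OF vH dk])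
  have Ek: "energy a b G L (u k) \<le> c k" for k
  proof -
    have "(\<lambda>x. v x + (mk k - m0) * x / L) \<in> H1_m L (m0 + (mk k - m0))" by (rule shift_H1m[OF vH])
    then have "(\<lambda>x. v x + (mk k - m0) * x / L) \<in> H1_m L (mk k)" by simp
    then show ?thesis using u[of k] unfolding is_minimizer_def c_def by blast
  qed
  obtain w r where r: "strict_mono r" and wH: "w \<in> H1_m L m0" and wE: "energy a b G L w \<le> energy a b G L v"
    and pw: "\<forall>x\<in>{-L..L}. (\<lambda>k. u (r k) x) \<longlonglongrightarrow> w x"
    using compactness[OF uH mkl Ek cl] by blast
  have wmin: "is_minimizer a b G L m0 w"
    unfolding is_minimizer_def using wH wE v unfolding is_minimizer_def by (meson order_trans)
  have "odd_on L w"
    unfolding odd_on_def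
  proof
    fix x assume x: "x \<in> {-L<..<L}"
    have x1: "x \<in> {-L..L}" and x2: "-x \<in> {-L..L}" using x by auto
    have "(\<lambda>k. u (r k) (-x)) \<longlonglongrightarrow> w (-x)" using pw x2 by blast
    moreover have "(\<lambda>k. u (r k) (-x)) = (\<lambda>k. - u (r k) x)"
      using uodd x unfolding odd_on_def by blast
    moreover have "(\<lambda>k. - u (r k) x) \<longlonglongrightarrow> - w x"
    proof -
      have "(\<lambda>k. u (r k) x) \<longlonglongrightarrow> w x" using pw x1 by blast
      then show ?thesis by (rule tendsto_minus)
    qed
    ultimately show "w (-x) = - w x" using LIMSEQ_unique by metis
  qed
  with nonodd wmin show False by blast
qed

theorem proposition5p4:
  fixes a b G :: "real \<Rightarrow> real" and M L m0 :: real
  assumes a_cont: "continuous_on UNIV a" and a_even: "even_fun a" and a_pos: "\<forall>x. a x > 0"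
    and b_cont: "continuous_on UNIV b" and b_even: "even_fun b" and b_pos: "\<forall>x. b x > 0"
    and G_reg: "C11_loc G" and G_even: "even_fun G"
    and M_pos: "M > 0" and GM: "G M = 0" and G_ge: "\<forall>s. G s \<ge> G M"
    and G_pos: "\<forall>s\<in>{0..<M}. G s > 0"
    and L_pos: "L > 0"
    and m0_nonneg: "m0 \<ge> 0"
    and nonodd: "\<forall>u. is_minimizer a b G L m0 u \<longrightarrow> \<not> odd_on L u"
  shows "\<exists>\<epsilon>>0. \<forall>m. m0 - \<epsilon> < m \<and> m < m0 + \<epsilon> \<and> m \<ge> 0 \<longrightarrow>
            (\<exists>u. is_minimizer a b G L m u \<and> \<not> odd_on L u)"
    by (rule main_thm[OF assms])

end
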